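(* Let $\alpha>0$, $R>0$ and $B>R$ be fixed. For $n\ge 1$ observe $X^{(n)}$ from the Gaussian white noise model $dX^{(n)}(t)=f(t)\,dt+n^{-1/2}\,dW(t)$, $t\in[0,1]$, where $W$ is a standard Brownian motion and $f\in L^\infty[0,1]$. Equivalently one observes $x_{lk}=\int_0^1\psi_{lk}\,dX^{(n)}=f_{lk}+n^{-1/2}\varepsilon_{lk}$, $l\ge0$, $0\le k\le 2^l-1$, where $f_{lk}=\langle f,\psi_{lk}\rangle_2$ and the $\varepsilon_{lk}$ are i.i.d. $N(0,1)$. Suppose the true function $f_0$ satisfies $$\sup_{l\ge0,\,0\le k\le 2^l-1}2^{l(1/2+\alpha)}|f_{0,lk}|\le R .$$ Let the prior $\Pi$ on $f$ make the coefficients $f_{lk}$ independent, $f_{lk}$ having Lebesgue density $x\mapsto\sigma_l^{-1}\varphi(x/\sigma_l)$ on $\mathbb{R}$, where $\varphi(x)=\frac{1}{2B}\mathbf{1}_{[-B,B]}(x)$ and $\sigma_l=2^{-l(1/2+\alpha)}$. Then there exists $M>0$ such that for all $n\ge2$, $$E_{f_0}^n\int\|f-f_0\|_\infty\,d\Pi(f\mid X^{(n)})\le M\Big(\frac{\log n}{n}\Big)^{\alpha/(2\alpha+1)} .$$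
   Context: $\{\psi_{lk}: l\ge0,\ 0\le k\le 2^l-1\}$ is the boundary-corrected wavelet basis of $L^2[0,1]$ of Cohen–Daubechies–Vial (relabelled so that levels start at $l=0$), chosen sufficiently regular: it is an orthonormal basis of $L^2[0,1]$; $\psi_{lk}$ is supported in a set of diameter at most a constant times $2^{-l}$; $\|\psi_{lk}\|_\infty\lesssim 2^{l/2}$; $\|\sum_k|\psi_{lk}|\|_\infty\lesssim 2^{l/2}$; each $\psi_{lk}$ is Hölder of order $S\ge\alpha$. $\langle\cdot,\cdot\rangle_2$ is the $L^2[0,1]$ inner product. $\Pi(\cdot\mid X^{(n)})$ denotes the posterior distribution and $E_{f_0}^n$ expectation under the law of $X^{(n)}$ when $f=f_0$. *)

theory Defs
  imports "HOL-Probability.Probability"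
begin

definition wav_idx :: "(nat \<times> nat) set" where
  "wav_idx = {(l, k). k < 2 ^ l}"

definition holder01 :: "real \<Rightarrow> (real \<Rightarrow> real) \<Rightarrow> bool" where
  "holder01 S g \<longleftrightarrow> (\<exists>(m::nat) (D::nat \<Rightarrow> real \<Rightarrow> real) (C::real).
      real m < S \<and> S \<le> real m + 1 \<and>
      (\<forall>t\<in>{0..1}. D 0 t = g t) \<and>
      (\<forall>j<m. \<forall>t\<in>{0..1}. (D j has_real_derivative D (Suc j) t) (at t within {0..1})) \<and>
      (\<forall>s\<in>{0..1}. \<forall>t\<in>{0..1}. \<bar>D m s - D m t\<bar> \<le> C * \<bar>s - t\<bar> powr (S - real m)))"

text \<open>Standing assumptions on the (boundary-corrected, CDV) wavelet basis, with regularity S.\<close>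
definition wavelet_basis :: "(nat \<Rightarrow> nat \<Rightarrow> real \<Rightarrow> real) \<Rightarrow> real \<Rightarrow> bool" where
  "wavelet_basis \<psi> S \<longleftrightarrow>
     (\<forall>l k. \<psi> l k \<in> borel_measurable lborel) \<and>
     (\<forall>l k. k < 2 ^ l \<longrightarrow> set_integrable lborel {0..1} (\<lambda>t. (\<psi> l k t)\<^sup>2)) \<and>
     \<comment> \<open>orthonormality in L2[0,1]\<close>
     (\<forall>l k l' k'. k < 2 ^ l \<longrightarrow> k' < 2 ^ l' \<longrightarrow>
        (LINT t:{0..1}|lborel. \<psi> l k t * \<psi> l' k' t) = (if (l, k) = (l', k') then 1 else 0)) \<and>
     \<comment> \<open>completeness in L2[0,1]\<close>
     (\<forall>g. g \<in> borel_measurable lborel \<longrightarrow> set_integrable lborel {0..1} (\<lambda>t. (g t)\<^sup>2) \<longrightarrow>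
        (\<forall>l k. k < 2 ^ l \<longrightarrow> (LINT t:{0..1}|lborel. g t * \<psi> l k t) = 0) \<longrightarrow>
        (AE t in lborel. t \<in> {0..1} \<longrightarrow> g t = 0)) \<and>
     (\<exists>C>0.
        \<comment> \<open>support of diameter \<lesssim> 2^-l\<close>
        (\<forall>l k. k < 2 ^ l \<longrightarrow> (\<exists>a b. b - a \<le> C * 2 powr (- real l) \<and>
            (\<forall>t\<in>{0..1}. \<psi> l k t \<noteq> 0 \<longrightarrow> t \<in> {a..b}))) \<and>
        \<comment> \<open>sup-norm bound\<close>
        (\<forall>l k. k < 2 ^ l \<longrightarrow> (\<forall>t\<in>{0..1}. \<bar>\<psi> l k t\<bar> \<le> C * 2 powr (real l / 2))) \<and>
        \<comment> \<open>bound on the sum over k of |psi_lk|\<close>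
        (\<forall>l. \<forall>t\<in>{0..1}. (\<Sum>k<2 ^ l. \<bar>\<psi> l k t\<bar>) \<le> C * 2 powr (real l / 2))) \<and>
     \<comment> \<open>regularity\<close>
     (\<forall>l k. k < 2 ^ l \<longrightarrow> holder01 S (\<psi> l k))"

definition wcoef :: "(nat \<Rightarrow> nat \<Rightarrow> real \<Rightarrow> real) \<Rightarrow> (real \<Rightarrow> real) \<Rightarrow> nat \<Rightarrow> nat \<Rightarrow> real" where
  "wcoef \<psi> f l k = (LINT t:{0..1}|lborel. f t * \<psi> l k t)"

definition wsynth :: "(nat \<Rightarrow> nat \<Rightarrow> real \<Rightarrow> real) \<Rightarrow> (nat \<times> nat \<Rightarrow> real) \<Rightarrow> real \<Rightarrow> real" where
  "wsynth \<psi> \<theta> t = (\<Sum>l. \<Sum>k<2 ^ l. \<theta> (l, k) * \<psi> l k t)"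

definition Linf_norm01 :: "(real \<Rightarrow> real) \<Rightarrow> ennreal" where
  "Linf_norm01 g = esssup (restrict_space lborel {0..1}) (\<lambda>t. ennreal \<bar>g t\<bar>)"

definition in_Linf01 :: "(real \<Rightarrow> real) \<Rightarrow> bool" where
  "in_Linf01 g \<longleftrightarrow> g \<in> borel_measurable lborel \<and> (\<exists>C. AE t in lborel. t \<in> {0..1} \<longrightarrow> \<bar>g t\<bar> \<le> C)"

definition unif_phi :: "real \<Rightarrow> real \<Rightarrow> real" where
  "unif_phi B x = (if x \<in> {-B..B} then 1 / (2 * B) else 0)"

definition sigma_l :: "real \<Rightarrow> nat \<Rightarrow> real" where
  "sigma_l \<alpha> l = 2 powr (- real l * (1/2 + \<alpha>))"

definition prior_dens :: "real \<Rightarrow> real \<Rightarrow> real \<Rightarrow> real" where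
  "prior_dens B \<sigma> x = unif_phi B (x / \<sigma>) / \<sigma>"

text \<open>Posterior of a single coefficient given the observation x = f_lk + n^(-1/2) eps_lk
  (Bayes formula: prior density times Gaussian likelihood, normalised).\<close>
definition post_coord :: "real \<Rightarrow> real \<Rightarrow> nat \<Rightarrow> real \<Rightarrow> real measure" where
  "post_coord B \<sigma> n x =
     density lborel (\<lambda>u. ennreal (prior_dens B \<sigma> u * exp (- real n * (x - u)\<^sup>2 / 2)) /
        (\<integral>\<^sup>+ v. ennreal (prior_dens B \<sigma> v * exp (- real n * (x - v)\<^sup>2 / 2)) \<partial>lborel))"

text \<open>Posterior Pi(. | X^(n)) on the coefficient sequence: under the product prior and the
  independent Gaussian sequence model it is the product of the coordinate posteriors.\<close>
definition posterior :: "real \<Rightarrow> real \<Rightarrow> nat \<Rightarrow> (nat \<times> nat \<Rightarrow> real) \<Rightarrow> (nat \<times> nat \<Rightarrow> real) measure" where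
  "posterior \<alpha> B n X = PiM wav_idx (\<lambda>(l, k). post_coord B (sigma_l \<alpha> l) n (X (l, k)))"

definition noise :: "(nat \<times> nat \<Rightarrow> real) measure" where
  "noise = PiM wav_idx (\<lambda>_. density lborel std_normal_density)"

definition observ :: "(nat \<Rightarrow> nat \<Rightarrow> real \<Rightarrow> real) \<Rightarrow> (real \<Rightarrow> real) \<Rightarrow> nat \<Rightarrow> (nat \<times> nat \<Rightarrow> real) \<Rightarrow> (nat \<times> nat \<Rightarrow> real)" where
  "observ \<psi> f0 n \<epsilon> = (\<lambda>(l, k). wcoef \<psi> f0 l k + \<epsilon> (l, k) / sqrt (real n))"

end

theory Submission
  imports Defs
begin


lemma ln_ge_half: assumes "(n::nat) \<ge> 2" shows "ln (real n) \<ge> 1/2"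
proof -
  have "ln (1 / real n) \<le> 1 / real n - 1" using assms by (intro ln_le_minus_one) auto
  then have "ln (real n) \<ge> 1 - 1 / real n" using assms by (simp add: ln_div)
  moreover have "1 / real n \<le> 1/2" using assms by (simp add: field_simps)
  ultimately show ?thesis by linarith
qed

lemma y_props:
  assumes "(n::nat) \<ge> 2"
  shows "0 < ln (real n) / real n" "ln (real n) / real n \<le> 1" "1 / (2 * real n) \<le> ln (real n) / real n"
proof -
  have l: "ln (real n) \<ge> 1/2" by (rule ln_ge_half[OF assms])
  have np: "real n > 0" using assms by simp
  show "0 < ln (real n) / real n" using l np assms by (intro divide_pos_pos) auto
  have "ln (real n) \<le> real n - 1" using np by (intro ln_le_minus_one)
  then show "ln (real n) / real n \<le> 1" using np by (simp add: field_simps)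
  show "1 / (2 * real n) \<le> ln (real n) / real n" using l np by (simp add: field_simps)
qed

lemma choose_L:
  assumes "0 < r" "r \<le> 1"
  shows "2 ^ nat \<lfloor>log 2 (1 / r)\<rfloor> \<le> 1 / r" "1 / r < 2 ^ Suc (nat \<lfloor>log 2 (1 / r)\<rfloor>)"
proof -
  define L where "L = nat \<lfloor>log 2 (1 / r)\<rfloor>"
  have lg: "log 2 (1 / r) \<ge> 0" using assms by simp
  have RL: "real L = of_int \<lfloor>log 2 (1 / r)\<rfloor>" unfolding L_def using lg by simp
  have "(2::real) ^ L = 2 powr real L" by (simp add: powr_realpow)
  also have "\<dots> \<le> 2 powr log 2 (1 / r)" unfolding RL by (intro powr_mono) auto
  also have "\<dots> = 1 / r" using assms by simp
  finally show "2 ^ nat \<lfloor>log 2 (1 / r)\<rfloor> \<le> 1 / r" unfolding L_def .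
  have "1 / r = 2 powr log 2 (1 / r)" using assms by simp
  also have "\<dots> < 2 powr (real L + 1)" unfolding RL by (intro powr_less_mono) linarith+
  also have "\<dots> = 2 ^ Suc L" by (simp add: powr_realpow[symmetric] powr_add)
  finally show "1 / r < 2 ^ Suc (nat \<lfloor>log 2 (1 / r)\<rfloor>)" unfolding L_def .
qed

lemma powr_half: "(2::real) powr (real l / 2) = sqrt 2 ^ l"
proof -
  have "(2::real) powr (real l / 2) = (2 powr (1/2)) powr real l" by (simp add: powr_powr)
  also have "\<dots> = sqrt 2 ^ l" by (simp add: powr_half_sqrt powr_realpow)
  finally show ?thesis .
qed

lemma sum_sqrt2: "(\<Sum>l<Suc L. sqrt 2 ^ l) \<le> (2 + sqrt 2) * sqrt 2 ^ L"
proof (induction L)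
  case 0 then show ?case by simp
next
  case (Suc L)
  have "(\<Sum>l<Suc (Suc L). sqrt 2 ^ l) = (\<Sum>l<Suc L. sqrt 2 ^ l) + sqrt 2 * sqrt 2 ^ L" by simp
  also have "\<dots> \<le> (2 + sqrt 2) * sqrt 2 ^ L + sqrt 2 * sqrt 2 ^ L" using Suc by simp
  also have "\<dots> = (2 + sqrt 2) * sqrt 2 ^ Suc L" by (simp add: algebra_simps)
  finally show ?case .
qed

lemma exp_ln_pow: assumes "n > (0::real)" shows "exp (- (real k * ln n)) = 1 / n ^ k"
proof -
  have "exp (real k * ln n) = exp (ln n) ^ k" by (rule exp_of_nat_mult)
  then show ?thesis using assms by (simp add: exp_minus field_simps)
qed


definition fx :: "real \<Rightarrow> real \<Rightarrow> nat \<Rightarrow> real \<Rightarrow> real \<Rightarrow> real" where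
  "fx B \<sigma> n x u = prior_dens B \<sigma> u * exp (- real n * (x - u)\<^sup>2 / 2)"

lemma prior_dens_eq:
  assumes "B > 0" "\<sigma> > 0"
  shows "prior_dens B \<sigma> u = (if \<bar>u\<bar> \<le> B * \<sigma> then 1 / (2 * B * \<sigma>) else 0)"
proof -
  have "(u / \<sigma> \<in> {-B..B}) = (\<bar>u\<bar> \<le> B * \<sigma>)"
    using assms by (auto simp: abs_le_iff field_simps)
  then show ?thesis using assms by (simp add: prior_dens_def unif_phi_def)
qed

lemma fx_meas[measurable]: "fx B \<sigma> n x \<in> borel_measurable borel"
  unfolding fx_def prior_dens_def unif_phi_def by measurable

lemma fx_nonneg: "B > 0 \<Longrightarrow> \<sigma> > 0 \<Longrightarrow> fx B \<sigma> n x u \<ge> 0"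
  by (simp add: fx_def prior_dens_eq)

lemma fx_le: assumes "B > 0" "\<sigma> > 0"
  shows "fx B \<sigma> n x u \<le> 1 / (2 * B * \<sigma>) * indicator {-(B*\<sigma>)..B*\<sigma>} u"
proof -
  have "exp (- real n * (x - u)\<^sup>2 / 2) \<le> 1" by simp
  then show ?thesis using assms
    by (auto simp: fx_def prior_dens_eq indicator_def abs_le_iff intro!: divide_right_mono)
qed

lemma nn_integral_box:
  assumes "B > 0" "\<sigma> > 0"
  shows "(\<integral>\<^sup>+ u. ennreal (1 / (2 * B * \<sigma>) * indicator {-(B*\<sigma>)..B*\<sigma>} u) \<partial>lborel) = 1"
proof -
  have "(\<integral>\<^sup>+ u. ennreal (1 / (2 * B * \<sigma>) * indicator {-(B*\<sigma>)..B*\<sigma>} u) \<partial>lborel)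
      = (\<integral>\<^sup>+ u. ennreal (1 / (2 * B * \<sigma>)) * indicator {-(B*\<sigma>)..B*\<sigma>} u \<partial>lborel)"
    by (intro nn_integral_cong) (auto simp: indicator_def)
  also have "\<dots> = ennreal (1 / (2 * B * \<sigma>)) * ennreal (2 * B * \<sigma>)"
    using assms by (subst nn_integral_cmult) (auto simp: algebra_simps)
  also have "\<dots> = 1" using assms by (simp add: ennreal_mult'[symmetric])
  finally show ?thesis .
qed

lemma Z_le1:
  assumes "B > 0" "\<sigma> > 0"
  shows "(\<integral>\<^sup>+ v. ennreal (fx B \<sigma> n x v) \<partial>lborel) \<le> 1"
proof -
  have "(\<integral>\<^sup>+ v. ennreal (fx B \<sigma> n x v) \<partial>lborel)
     \<le> (\<integral>\<^sup>+ u. ennreal (1 / (2 * B * \<sigma>) * indicator {-(B*\<sigma>)..B*\<sigma>} u) \<partial>lborel)"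
    by (intro nn_integral_mono ennreal_leI fx_le assms)
  then show ?thesis using nn_integral_box[OF assms] by simp
qed

lemma Z_lower:
  assumes "B > 0" "\<sigma> > 0" "s > 0" "\<bar>c\<bar> + s \<le> B * \<sigma>"
    and D: "\<And>u. \<bar>u - c\<bar> \<le> s \<Longrightarrow> real n * (x - u)\<^sup>2 / 2 \<le> D"
  shows "ennreal (s / (B * \<sigma>) * exp (- D)) \<le> (\<integral>\<^sup>+ v. ennreal (fx B \<sigma> n x v) \<partial>lborel)"
proof -
  have "(\<integral>\<^sup>+ v. ennreal (1 / (2 * B * \<sigma>) * exp (- D)) * indicator {c-s..c+s} v \<partial>lborel)
      \<le> (\<integral>\<^sup>+ v. ennreal (fx B \<sigma> n x v) \<partial>lborel)"
  proof (intro nn_integral_mono)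
    fix v
    show "ennreal (1 / (2 * B * \<sigma>) * exp (- D)) * indicator {c-s..c+s} v \<le> ennreal (fx B \<sigma> n x v)"
    proof (cases "v \<in> {c-s..c+s}")
      case True
      then have 1: "\<bar>v - c\<bar> \<le> s" by auto
      then have "\<bar>v\<bar> \<le> B * \<sigma>" using assms(4) by linarith
      moreover have "exp (- D) \<le> exp (- real n * (x - v)\<^sup>2 / 2)" using D[OF 1] by simp
      ultimately show ?thesis using True assms
        by (auto simp: fx_def prior_dens_eq intro!: ennreal_leI divide_right_mono)
    qed simp
  qed
  moreover have "(\<integral>\<^sup>+ v. ennreal (1 / (2 * B * \<sigma>) * exp (- D)) * indicator {c-s..c+s} v \<partial>lborel)
      = ennreal (1 / (2 * B * \<sigma>) * exp (- D)) * ennreal (2 * s)"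
    using assms by (subst nn_integral_cmult) auto
  moreover have "ennreal (1 / (2 * B * \<sigma>) * exp (- D)) * ennreal (2 * s) = ennreal (s / (B * \<sigma>) * exp (- D))"
    using assms by (simp add: ennreal_mult'[symmetric])
  ultimately show ?thesis by simp
qed


definition zz :: "real \<Rightarrow> real \<Rightarrow> nat \<Rightarrow> real \<Rightarrow> real" where
  "zz B \<sigma> n x = enn2real (\<integral>\<^sup>+ v. ennreal (fx B \<sigma> n x v) \<partial>lborel)"

lemma Z_eq:
  assumes "B > 0" "\<sigma> > 0"
  shows "(\<integral>\<^sup>+ v. ennreal (fx B \<sigma> n x v) \<partial>lborel) = ennreal (zz B \<sigma> n x)"
proof -
  have "(\<integral>\<^sup>+ v. ennreal (fx B \<sigma> n x v) \<partial>lborel) < \<top>"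
    using Z_le1[OF assms, of n x] by (simp add: order_le_less_trans)
  then show ?thesis unfolding zz_def by (simp add: ennreal_enn2real_if)
qed

lemma zz_pos:
  assumes "B > 0" "\<sigma> > 0"
  shows "zz B \<sigma> n x > 0"
proof -
  have "ennreal (B * \<sigma> / (B * \<sigma>) * exp (- (real n * (\<bar>x\<bar> + B * \<sigma>)\<^sup>2 / 2)))
      \<le> (\<integral>\<^sup>+ v. ennreal (fx B \<sigma> n x v) \<partial>lborel)"
  proof (rule Z_lower[where c=0])
    fix u assume "\<bar>u - 0\<bar> \<le> B * \<sigma>"
    then have "\<bar>x - u\<bar> \<le> \<bar>x\<bar> + B * \<sigma>" by linarith
    then have "(x - u)\<^sup>2 \<le> (\<bar>x\<bar> + B * \<sigma>)\<^sup>2"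
      by (metis abs_ge_zero power2_abs power_mono)
    then show "real n * (x - u)\<^sup>2 / 2 \<le> real n * (\<bar>x\<bar> + B * \<sigma>)\<^sup>2 / 2"
      by (intro divide_right_mono mult_left_mono) auto
  qed (use assms in auto)
  then have "0 < (\<integral>\<^sup>+ v. ennreal (fx B \<sigma> n x v) \<partial>lborel)"
    using assms by (auto elim!: less_le_trans[rotated])
  then show ?thesis using Z_eq[OF assms] by simp
qed

lemma post_coord_eq:
  assumes "B > 0" "\<sigma> > 0"
  shows "post_coord B \<sigma> n x = density lborel (\<lambda>u. ennreal (fx B \<sigma> n x u / zz B \<sigma> n x))"
proof -
  have "post_coord B \<sigma> n x = density lborel (\<lambda>u. ennreal (fx B \<sigma> n x u) / ennreal (zz B \<sigma> n x))"
    unfolding post_coord_def Z_eq[OF assms, symmetric] fx_def ..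
  also have "\<dots> = density lborel (\<lambda>u. ennreal (fx B \<sigma> n x u / zz B \<sigma> n x))"
    using zz_pos[OF assms] fx_nonneg[OF assms] by (simp add: divide_ennreal)
  finally show ?thesis .
qed

lemma prob_post:
  assumes "B > 0" "\<sigma> > 0"
  shows "prob_space (post_coord B \<sigma> n x)"
proof
  have "emeasure (post_coord B \<sigma> n x) (space (post_coord B \<sigma> n x))
     = (\<integral>\<^sup>+ u. ennreal (fx B \<sigma> n x u / zz B \<sigma> n x) \<partial>lborel)"
    unfolding post_coord_eq[OF assms] by (simp add: emeasure_density)
  also have "\<dots> = (\<integral>\<^sup>+ u. ennreal (fx B \<sigma> n x u) * ennreal (1 / zz B \<sigma> n x) \<partial>lborel)"
    using zz_pos[OF assms] fx_nonneg[OF assms]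
    by (intro nn_integral_cong) (simp add: ennreal_mult'[symmetric])
  also have "\<dots> = ennreal (zz B \<sigma> n x) * ennreal (1 / zz B \<sigma> n x)"
    by (subst nn_integral_multc) (auto simp: Z_eq[OF assms])
  also have "\<dots> = 1"
    using zz_pos[OF assms, of n x] by (simp add: ennreal_mult'[symmetric])
  finally show "emeasure (post_coord B \<sigma> n x) (space (post_coord B \<sigma> n x)) = 1" .
qed

lemma sets_post[simp, measurable_cong]: "sets (post_coord B \<sigma> n x) = sets borel"
  by (simp add: post_coord_def)

lemma AE_post_supp:
  assumes "B > 0" "\<sigma> > 0"
  shows "AE u in post_coord B \<sigma> n x. \<bar>u\<bar> \<le> B * \<sigma>"
  unfolding post_coord_eq[OF assms]
  by (subst AE_density) (auto simp: fx_def prior_dens_eq[OF assms])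

lemma post_int_bounded:
  assumes "B > 0" "\<sigma> > 0" "h \<in> borel_measurable borel"
    and "\<And>u. \<bar>u\<bar> \<le> B * \<sigma> \<Longrightarrow> h u \<le> K"
  shows "(\<integral>\<^sup>+ u. ennreal (h u) \<partial>post_coord B \<sigma> n x) \<le> ennreal K"
proof -
  interpret prob_space "post_coord B \<sigma> n x" by (rule prob_post[OF assms(1,2)])
  have "(\<integral>\<^sup>+ u. ennreal (h u) \<partial>post_coord B \<sigma> n x) \<le> (\<integral>\<^sup>+ u. ennreal K \<partial>post_coord B \<sigma> n x)"
    using AE_post_supp[OF assms(1,2), of n x] by (intro nn_integral_mono_AE) (auto elim!: eventually_mono intro: assms(4) ennreal_leI)
  also have "\<dots> = ennreal K" by (simp add: emeasure_space_1)
  finally show ?thesis .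
qed


definition hh :: "real \<Rightarrow> real \<Rightarrow> real \<Rightarrow> real" where
  "hh c \<tau> u = \<bar>u - c\<bar> * (if \<tau> < \<bar>u - c\<bar> then 1 else 0)"

lemma hh_meas[measurable]: "hh c \<tau> \<in> borel_measurable borel"
  unfolding hh_def by measurable

lemma hh_nonneg: "hh c \<tau> u \<ge> 0" by (simp add: hh_def)

lemma post_tail:
  assumes B: "B > 0" and sig: "\<sigma> > 0" and RB: "R < B" and c: "\<bar>c\<bar> \<le> R * \<sigma>" and tau: "\<tau> > 0"
    and x: "\<bar>x - c\<bar> \<le> \<tau> / 4"
  shows "(\<integral>\<^sup>+ u. ennreal (hh c \<tau> u) \<partial>post_coord B \<sigma> n x)
     \<le> ennreal (2 * (B * \<sigma>)\<^sup>2 / min (\<tau> / 4) ((B - R) * \<sigma>) * exp (- 5 * real n * \<tau>\<^sup>2 / 32))"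
proof -
  define s where "s = min (\<tau> / 4) ((B - R) * \<sigma>)"
  define z where "z = zz B \<sigma> n x"
  have s: "s > 0" using tau RB sig by (simp add: s_def)
  have z: "z > 0" using zz_pos[OF B sig] by (simp add: z_def)
  have "ennreal (s / (B * \<sigma>) * exp (- (real n * \<tau>\<^sup>2 / 8))) \<le> (\<integral>\<^sup>+ v. ennreal (fx B \<sigma> n x v) \<partial>lborel)"
  proof (rule Z_lower[OF B sig s])
    have "s \<le> (B - R) * \<sigma>" by (simp add: s_def)
    then show "\<bar>c\<bar> + s \<le> B * \<sigma>" using c by (simp add: algebra_simps)
    fix u assume "\<bar>u - c\<bar> \<le> s"
    then have "\<bar>u - c\<bar> \<le> \<tau> / 4" by (simp add: s_def)
    then have "\<bar>x - u\<bar> \<le> \<tau> / 2" using x by linarith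
    then have "(x - u)\<^sup>2 \<le> (\<tau> / 2)\<^sup>2"
      by (metis abs_ge_zero power2_abs power_mono)
    then have "real n * (x - u)\<^sup>2 \<le> real n * (\<tau> / 2)\<^sup>2" by (intro mult_left_mono) auto
    then show "real n * (x - u)\<^sup>2 / 2 \<le> real n * \<tau>\<^sup>2 / 8" by (simp add: power2_eq_square)
  qed
  then have zlow: "s / (B * \<sigma>) * exp (- (real n * \<tau>\<^sup>2 / 8)) \<le> z"
    unfolding z_def Z_eq[OF B sig] using z by (simp add: z_def)
  have zlow_pos: "s / (B * \<sigma>) * exp (- (real n * \<tau>\<^sup>2 / 8)) > 0" using s B sig by simp
  define E where "E = exp (- 9 * real n * \<tau>\<^sup>2 / 32)"
  have "(\<integral>\<^sup>+ u. ennreal (hh c \<tau> u) \<partial>post_coord B \<sigma> n x)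
      = (\<integral>\<^sup>+ u. ennreal (fx B \<sigma> n x u / z) * ennreal (hh c \<tau> u) \<partial>lborel)"
    unfolding post_coord_eq[OF B sig] z_def by (subst nn_integral_density) auto
  also have "\<dots> \<le> (\<integral>\<^sup>+ u. ennreal (1 / (2 * B * \<sigma>) * indicator {-(B*\<sigma>)..B*\<sigma>} u) * ennreal (2 * B * \<sigma> * E / z) \<partial>lborel)"
  proof (intro nn_integral_mono)
    fix u
    show "ennreal (fx B \<sigma> n x u / z) * ennreal (hh c \<tau> u)
      \<le> ennreal (1 / (2 * B * \<sigma>) * indicator {-(B*\<sigma>)..B*\<sigma>} u) * ennreal (2 * B * \<sigma> * E / z)"
    proof (cases "\<bar>u\<bar> \<le> B * \<sigma> \<and> \<tau> < \<bar>u - c\<bar>")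
      case True
      then have u: "\<bar>u\<bar> \<le> B * \<sigma>" and ut: "\<tau> < \<bar>u - c\<bar>" by auto
      have "R * \<sigma> \<le> B * \<sigma>" using RB sig by simp
      then have hb: "hh c \<tau> u \<le> 2 * B * \<sigma>"
        using u c ut by (simp add: hh_def)
      have "3 * \<tau> / 4 \<le> \<bar>x - u\<bar>" using ut x by linarith
      then have "(3 * \<tau> / 4)\<^sup>2 \<le> (x - u)\<^sup>2" using tau
        by (metis abs_ge_zero power2_abs power_mono less_imp_le zero_le_divide_iff zero_le_mult_iff zero_le_numeral)
      then have "real n * (3 * \<tau> / 4)\<^sup>2 \<le> real n * (x - u)\<^sup>2" by (intro mult_left_mono) auto
      then have "- real n * (x - u)\<^sup>2 / 2 \<le> - 9 * real n * \<tau>\<^sup>2 / 32"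
        by (simp add: power2_eq_square algebra_simps)
      then have eb: "exp (- real n * (x - u)\<^sup>2 / 2) \<le> E" unfolding E_def by simp
      have "fx B \<sigma> n x u / z * hh c \<tau> u = 1 / (2 * B * \<sigma>) * exp (- real n * (x - u)\<^sup>2 / 2) * hh c \<tau> u / z"
        using u B sig by (simp add: fx_def prior_dens_eq)
      also have "\<dots> \<le> 1 / (2 * B * \<sigma>) * E * (2 * B * \<sigma>) / z"
        using z B sig eb hb hh_nonneg[of c \<tau> u]
        by (intro divide_right_mono mult_mono mult_left_mono) (auto simp: E_def)
      also have "\<dots> = 1 / (2 * B * \<sigma>) * indicator {-(B*\<sigma>)..B*\<sigma>} u * (2 * B * \<sigma> * E / z)"
        using u by (simp add: indicator_def abs_le_iff)
      finally show ?thesis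
        using z B sig fx_nonneg[OF B sig] hh_nonneg
        by (simp add: ennreal_mult'[symmetric] E_def ennreal_leI)
    next
      case False
      then have "fx B \<sigma> n x u / z * hh c \<tau> u = 0"
        using B sig by (auto simp: fx_def prior_dens_eq hh_def)
      then have "ennreal (fx B \<sigma> n x u / z) * ennreal (hh c \<tau> u) = 0"
        using z B sig fx_nonneg[OF B sig] hh_nonneg
        by (simp add: ennreal_mult'[symmetric])
      then show ?thesis by (simp only:) simp
    qed
  qed
  also have "\<dots> = ennreal (2 * B * \<sigma> * E / z)"
    by (subst nn_integral_multc, measurable, subst nn_integral_box[OF B sig], simp)
  also have "\<dots> \<le> ennreal (2 * (B * \<sigma>)\<^sup>2 / s * exp (- 5 * real n * \<tau>\<^sup>2 / 32))"
  proof (rule ennreal_leI)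
    have "2 * B * \<sigma> * E / z \<le> 2 * B * \<sigma> * E / (s / (B * \<sigma>) * exp (- (real n * \<tau>\<^sup>2 / 8)))"
    proof (rule divide_left_mono[OF zlow])
      show "0 \<le> 2 * B * \<sigma> * E" using B sig by (simp add: E_def)
      show "0 < z * (s / (B * \<sigma>) * exp (- (real n * \<tau>\<^sup>2 / 8)))"
        using \<open>z > 0\<close> zlow_pos by (rule mult_pos_pos)
    qed
    also have "\<dots> = 2 * (B * \<sigma>)\<^sup>2 / s * (E * exp (real n * \<tau>\<^sup>2 / 8))"
      using s B sig by (simp add: field_simps power2_eq_square exp_minus)
    also have "E * exp (real n * \<tau>\<^sup>2 / 8) = exp (- 5 * real n * \<tau>\<^sup>2 / 32)"
      unfolding E_def by (simp add: exp_add[symmetric] algebra_simps)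
    finally show "2 * B * \<sigma> * E / z \<le> 2 * (B * \<sigma>)\<^sup>2 / s * exp (- 5 * real n * \<tau>\<^sup>2 / 32)" .
  qed
  finally show ?thesis by (simp add: s_def)
qed


lemma "noise = PiM wav_idx (\<lambda>_. density lborel (\<lambda>x. ennreal (std_normal_density x)))"
  by (simp add: noise_def)

lemma std_prob: "prob_space (density lborel (\<lambda>x. ennreal (std_normal_density x)))"
  by (rule prob_space_normal_density) simp

lemma gauss_tail:
  assumes "u \<ge> 0"
  shows "(\<integral>\<^sup>+ e. indicator {e. u < \<bar>e\<bar>} e \<partial>density lborel (\<lambda>x. ennreal (std_normal_density x)))
     \<le> ennreal (sqrt 2 * exp (- u\<^sup>2 / 4))"
proof -
  have int1: "(\<integral>\<^sup>+ x. ennreal (normal_density 0 (sqrt 2) x) \<partial>lborel) = 1"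
  proof -
    interpret prob_space "density lborel (\<lambda>x. ennreal (normal_density 0 (sqrt 2) x))"
      by (rule prob_space_normal_density) simp
    show ?thesis using emeasure_space_1 by (simp add: emeasure_density)
  qed
  have "(\<integral>\<^sup>+ e. indicator {e. u < \<bar>e\<bar>} e \<partial>density lborel (\<lambda>x. ennreal (std_normal_density x)))
      = (\<integral>\<^sup>+ e. ennreal (std_normal_density e) * indicator {e. u < \<bar>e\<bar>} e \<partial>lborel)"
    by (subst nn_integral_density) auto
  also have "\<dots> \<le> (\<integral>\<^sup>+ e. ennreal (sqrt 2 * exp (- u\<^sup>2 / 4)) * ennreal (normal_density 0 (sqrt 2) e) \<partial>lborel)"
  proof (intro nn_integral_mono)
    fix e
    show "ennreal (std_normal_density e) * indicator {e. u < \<bar>e\<bar>} e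
        \<le> ennreal (sqrt 2 * exp (- u\<^sup>2 / 4)) * ennreal (normal_density 0 (sqrt 2) e)"
    proof (cases "u < \<bar>e\<bar>")
      case True
      then have "u\<^sup>2 \<le> e\<^sup>2" using assms
        by (metis abs_ge_zero power2_abs power_mono less_imp_le)
      then have "exp (- e\<^sup>2 / 2) \<le> exp (- u\<^sup>2 / 4) * exp (- e\<^sup>2 / 4)"
        by (simp add: exp_add[symmetric])
      moreover have "sqrt (2 * pi * (sqrt 2)\<^sup>2) = sqrt 2 * sqrt (2 * pi)"
        by (simp add: real_sqrt_mult[symmetric])
      ultimately have "std_normal_density e \<le> sqrt 2 * exp (- u\<^sup>2 / 4) * normal_density 0 (sqrt 2) e"
        unfolding std_normal_density_def normal_density_def
        by (simp add: field_simps)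
      then show ?thesis using True
        by (simp add: ennreal_mult'[symmetric] ennreal_leI)
    qed simp
  qed
  also have "\<dots> = ennreal (sqrt 2 * exp (- u\<^sup>2 / 4))"
    by (subst nn_integral_cmult) (auto simp: int1)
  finally show ?thesis .
qed

lemma gauss_phi:
  assumes "u \<ge> 0" "a \<ge> 0" "b \<ge> 0"
  shows "(\<integral>\<^sup>+ e. ennreal (a * indicator {e. u < \<bar>e\<bar>} e + b) \<partial>density lborel (\<lambda>x. ennreal (std_normal_density x)))
     \<le> ennreal (a * (sqrt 2 * exp (- u\<^sup>2 / 4)) + b)"
proof -
  interpret prob_space "density lborel (\<lambda>x. ennreal (std_normal_density x))" by (rule std_prob)
  have "(\<integral>\<^sup>+ e. ennreal (a * indicator {e. u < \<bar>e\<bar>} e + b) \<partial>density lborel (\<lambda>x. ennreal (std_normal_density x)))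
    = (\<integral>\<^sup>+ e. ennreal a * indicator {e. u < \<bar>e\<bar>} e + ennreal b \<partial>density lborel (\<lambda>x. ennreal (std_normal_density x)))"
    using assms by (intro nn_integral_cong) (auto simp: indicator_def ennreal_plus[symmetric] simp del: ennreal_plus)
  also have "\<dots> = ennreal a * (\<integral>\<^sup>+ e. indicator {e. u < \<bar>e\<bar>} e \<partial>density lborel (\<lambda>x. ennreal (std_normal_density x))) + ennreal b"
    using emeasure_space_1 by (subst nn_integral_add) (auto simp: nn_integral_cmult)
  also have "\<dots> \<le> ennreal a * ennreal (sqrt 2 * exp (- u\<^sup>2 / 4)) + ennreal b"
    by (intro add_mono mult_left_mono gauss_tail assms) auto
  also have "\<dots> = ennreal (a * (sqrt 2 * exp (- u\<^sup>2 / 4)) + b)"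
    using assms by (simp add: ennreal_mult'[symmetric] ennreal_plus[symmetric] del: ennreal_plus)
  finally show ?thesis .
qed


locale wv =
  fixes \<psi> :: "nat \<Rightarrow> nat \<Rightarrow> real \<Rightarrow> real" and C \<alpha> :: real
  assumes meas: "\<And>l k. \<psi> l k \<in> borel_measurable lborel"
    and orth: "\<And>l k l' k'. k < 2 ^ l \<Longrightarrow> k' < 2 ^ l' \<Longrightarrow>
        (LINT t:{0..1}|lborel. \<psi> l k t * \<psi> l' k' t) = (if (l, k) = (l', k') then 1 else 0)"
    and compl: "\<And>g. g \<in> borel_measurable lborel \<Longrightarrow> set_integrable lborel {0..1} (\<lambda>t. (g t)\<^sup>2) \<Longrightarrow>
        (\<forall>l k. k < 2 ^ l \<longrightarrow> (LINT t:{0..1}|lborel. g t * \<psi> l k t) = 0) \<Longrightarrow>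
        (AE t in lborel. t \<in> {0..1} \<longrightarrow> g t = 0)"
    and Cpos: "C > 0"
    and supb: "\<And>l k t. k < 2 ^ l \<Longrightarrow> t \<in> {0..1} \<Longrightarrow> \<bar>\<psi> l k t\<bar> \<le> C * 2 powr (real l / 2)"
    and sumb: "\<And>l t. t \<in> {0..1} \<Longrightarrow> (\<Sum>k<2 ^ l. \<bar>\<psi> l k t\<bar>) \<le> C * 2 powr (real l / 2)"
    and apos: "\<alpha> > 0"
begin

definition q :: real where "q = 2 powr (- \<alpha>)"
definition sg :: "nat \<Rightarrow> real" where "sg l = 2 powr (- real l * (1/2 + \<alpha>))"
definition cb :: "real \<Rightarrow> (nat \<times> nat \<Rightarrow> real) \<Rightarrow> bool" where
  "cb A \<theta> \<longleftrightarrow> (\<forall>l k. k < 2 ^ l \<longrightarrow> \<bar>\<theta> (l, k)\<bar> \<le> A * sg l)"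
definition lev :: "(nat \<times> nat \<Rightarrow> real) \<Rightarrow> nat \<Rightarrow> real \<Rightarrow> real" where
  "lev \<theta> l t = (\<Sum>k<2 ^ l. \<theta> (l, k) * \<psi> l k t)"
definition PS :: "(nat \<times> nat \<Rightarrow> real) \<Rightarrow> nat \<Rightarrow> real \<Rightarrow> real" where
  "PS \<theta> L t = (\<Sum>l<L. lev \<theta> l t)"

lemma q_pos: "q > 0" by (simp add: q_def)
lemma q_lt1: "q < 1"
  using powr_less_mono[of "-\<alpha>" 0 2] apos by (simp add: q_def)

lemma sg_pos: "sg l > 0" by (simp add: sg_def)

lemma sg_q: "sg l * 2 powr (real l / 2) = q ^ l"
proof -
  have "sg l * 2 powr (real l / 2) = 2 powr (- real l * (1/2 + \<alpha>) + real l / 2)"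
    unfolding sg_def by (rule powr_add[symmetric])
  also have "- real l * (1/2 + \<alpha>) + real l / 2 = - \<alpha> * real l" by (simp add: algebra_simps)
  also have "2 powr (- \<alpha> * real l) = q ^ l"
  proof -
    have "q ^ l = q powr real l" using q_pos by (simp add: powr_realpow)
    also have "\<dots> = 2 powr (- \<alpha> * real l)" unfolding q_def by (rule powr_powr)
    finally show ?thesis by simp
  qed
  finally show ?thesis .
qed

lemma sg_le1: "sg l \<le> 1"
proof -
  have "- real l * (1/2 + \<alpha>) \<le> 0" using apos by (simp add: mult_nonneg_nonneg)
  then show ?thesis using powr_mono[of "- real l * (1/2 + \<alpha>)" 0 2] by (simp add: sg_def)
qed

lemma meas_lev[measurable]: "lev \<theta> l \<in> borel_measurable lborel"
  unfolding lev_def using meas by measurable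

lemma meas_PS[measurable]: "PS \<theta> L \<in> borel_measurable lborel"
  unfolding PS_def by measurable

lemma cb_nonneg: assumes "cb A \<theta>" shows "A \<ge> 0"
proof -
  from assms have "\<bar>\<theta> (0, 0)\<bar> \<le> A * sg 0" unfolding cb_def by auto
  then have "0 \<le> A * sg 0" by linarith
  then show ?thesis using sg_pos[of 0] by (simp add: zero_le_mult_iff)
qed

lemma abs_lev_le:
  assumes "cb A \<theta>" "t \<in> {0..1}"
  shows "(\<Sum>k<2 ^ l. \<bar>\<theta> (l, k)\<bar> * \<bar>\<psi> l k t\<bar>) \<le> A * C * q ^ l"
proof -
  have A: "A * sg l \<ge> 0" using cb_nonneg[OF assms(1)] sg_pos[of l] by simp
  have "(\<Sum>k<2 ^ l. \<bar>\<theta> (l, k)\<bar> * \<bar>\<psi> l k t\<bar>) \<le> (\<Sum>k<2 ^ l. A * sg l * \<bar>\<psi> l k t\<bar>)"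
    using assms(1) by (intro sum_mono mult_right_mono) (auto simp: cb_def)
  also have "\<dots> = A * sg l * (\<Sum>k<2 ^ l. \<bar>\<psi> l k t\<bar>)" by (simp add: sum_distrib_left)
  also have "\<dots> \<le> A * sg l * (C * 2 powr (real l / 2))"
    using A sumb[OF assms(2)] by (intro mult_left_mono) auto
  also have "\<dots> = A * C * q ^ l" using sg_q[of l] by (simp add: algebra_simps)
  finally show ?thesis .
qed


lemma lev_bound:
  assumes "cb A \<theta>" "t \<in> {0..1}"
  shows "\<bar>lev \<theta> l t\<bar> \<le> A * C * q ^ l"
proof -
  have "\<bar>lev \<theta> l t\<bar> \<le> (\<Sum>k<2 ^ l. \<bar>\<theta> (l, k) * \<psi> l k t\<bar>)"
    unfolding lev_def by (rule sum_abs)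
  also have "\<dots> = (\<Sum>k<2 ^ l. \<bar>\<theta> (l, k)\<bar> * \<bar>\<psi> l k t\<bar>)" by (simp add: abs_mult)
  also have "\<dots> \<le> A * C * q ^ l" by (rule abs_lev_le[OF assms])
  finally show ?thesis .
qed

lemma summable_geo: "summable (\<lambda>l. K * q ^ l)"
  using q_pos q_lt1 by (intro summable_mult summable_geometric) simp

lemma suminf_geo: "(\<Sum>l. K * q ^ l) = K / (1 - q)"
  using q_pos q_lt1 by (subst suminf_mult) (simp_all add: suminf_geometric field_simps)

lemma lev_summable:
  assumes "cb A \<theta>" "t \<in> {0..1}"
  shows "summable (\<lambda>l. lev \<theta> l t)"
  by (rule summable_comparison_test'[OF summable_geo[of "A * C"]]) (use lev_bound[OF assms] in auto)

lemma wsynth_sums: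
  assumes "cb A \<theta>" "t \<in> {0..1}"
  shows "(\<lambda>l. lev \<theta> l t) sums wsynth \<psi> \<theta> t"
  using lev_summable[OF assms] unfolding wsynth_def lev_def by (simp add: summable_sums)

lemma PS_tendsto:
  assumes "cb A \<theta>" "t \<in> {0..1}"
  shows "(\<lambda>L. PS \<theta> L t) \<longlonglongrightarrow> wsynth \<psi> \<theta> t"
  using wsynth_sums[OF assms] unfolding sums_def PS_def .

lemma PS_bound:
  assumes "cb A \<theta>" "t \<in> {0..1}"
  shows "\<bar>PS \<theta> L t\<bar> \<le> A * C / (1 - q)"
proof -
  have "\<bar>PS \<theta> L t\<bar> \<le> (\<Sum>l<L. \<bar>lev \<theta> l t\<bar>)" unfolding PS_def by (rule sum_abs)
  also have "\<dots> \<le> (\<Sum>l<L. A * C * q ^ l)" by (intro sum_mono lev_bound[OF assms])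
  also have "\<dots> \<le> (\<Sum>l. A * C * q ^ l)"
    using cb_nonneg[OF assms(1)] Cpos q_pos
    by (intro sum_le_suminf summable_geo) auto
  also have "\<dots> = A * C / (1 - q)" by (rule suminf_geo)
  finally show ?thesis .
qed

lemma wsynth_bound:
  assumes "cb A \<theta>" "t \<in> {0..1}"
  shows "\<bar>wsynth \<psi> \<theta> t\<bar> \<le> A * C / (1 - q)"
  using PS_tendsto[OF assms] PS_bound[OF assms]
  by (intro tendsto_le[OF _ tendsto_const tendsto_rabs]) auto

end


lemma int01_bounded:
  fixes g :: "real \<Rightarrow> real"
  assumes "g \<in> borel_measurable lborel" "AE t in lborel. t \<in> {0..1} \<longrightarrow> \<bar>g t\<bar> \<le> K"
  shows "integrable lborel (\<lambda>t. indicator {0..1} t * g t)"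
proof (rule Bochner_Integration.integrable_bound)
  show "integrable lborel (\<lambda>t. K * indicator {0..1::real} t)"
    by (intro integrable_mult_right integrable_real_indicator) auto
  show "(\<lambda>t. indicator {0..1} t * g t) \<in> borel_measurable lborel" using assms(1) by measurable
  show "AE t in lborel. norm (indicator {0..1} t * g t) \<le> norm (K * indicator {0..1::real} t)"
    using assms(2) by eventually_elim (auto simp: indicator_def)
qed

context wv begin

lemma int_psi_prod:
  assumes "k < 2 ^ l" "k' < 2 ^ l'"
  shows "integrable lborel (\<lambda>t. indicator {0..1} t * (\<psi> l k t * \<psi> l' k' t))"
proof (rule int01_bounded)
  show "(\<lambda>t. \<psi> l k t * \<psi> l' k' t) \<in> borel_measurable lborel" using meas by measurable
  show "AE t in lborel. t \<in> {0..1} \<longrightarrow> \<bar>\<psi> l k t * \<psi> l' k' t\<bar> \<le> (C * 2 powr (real l / 2)) * (C * 2 powr (real l' / 2))"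
    using supb[OF assms(1)] supb[OF assms(2)]
    using Cpos by (intro AE_I2 impI) (auto simp: abs_mult intro!: mult_mono)
qed

lemma coef_id:
  assumes cb: "cb A \<theta>" and k': "k' < 2 ^ l'"
  shows "(LINT t:{0..1}|lborel. wsynth \<psi> \<theta> t * \<psi> l' k' t) = \<theta> (l', k')"
proof -
  define s where "s L t = indicator {0..1} t * (PS \<theta> L t * \<psi> l' k' t)" for L t
  define F where "F t = indicator {0..1} t * (wsynth \<psi> \<theta> t * \<psi> l' k' t)" for t
  have lim: "(\<lambda>L. s L t) \<longlonglongrightarrow> F t" for t
  proof (cases "t \<in> {0..1}")
    case True
    then show ?thesis unfolding s_def F_def
      by (intro tendsto_mult tendsto_const PS_tendsto[OF cb]) auto
  qed (simp add: s_def F_def)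
  have smeas[measurable]: "s L \<in> borel_measurable lborel" for L
    unfolding s_def using meas by measurable
  have Fmeas: "F \<in> borel_measurable lborel"
    by (rule borel_measurable_LIMSEQ_real[OF lim]) simp
  have conv: "(\<lambda>L. integral\<^sup>L lborel (s L)) \<longlonglongrightarrow> integral\<^sup>L lborel F"
  proof (rule integral_dominated_convergence[OF Fmeas smeas])
    show "integrable lborel (\<lambda>t. (A * C / (1 - q) * (C * 2 powr (real l' / 2))) * indicator {0..1::real} t)"
      by (intro integrable_mult_right integrable_real_indicator) auto
    show "AE x in lborel. (\<lambda>i. s i x) \<longlonglongrightarrow> F x" using lim by simp
    fix L
    show "AE x in lborel. norm (s L x) \<le> A * C / (1 - q) * (C * 2 powr (real l' / 2)) * indicator {0..1} x"
    proof (rule AE_I2)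
      fix t
      show "norm (s L t) \<le> A * C / (1 - q) * (C * 2 powr (real l' / 2)) * indicator {0..1} t"
      proof (cases "t \<in> {0..1}")
        case True
        have "\<bar>PS \<theta> L t * \<psi> l' k' t\<bar> \<le> A * C / (1 - q) * (C * 2 powr (real l' / 2))"
          unfolding abs_mult
          by (intro mult_mono PS_bound[OF cb True] supb[OF k' True]) (use cb_nonneg[OF cb] Cpos q_lt1 in auto)
        then show ?thesis using True by (simp add: s_def)
      qed (simp add: s_def)
    qed
  qed
  have sint: "integral\<^sup>L lborel (s L) = (if l' < L then \<theta> (l', k') else 0)" for L
  proof -
    have "s L t = (\<Sum>l<L. \<Sum>k<2 ^ l. \<theta> (l, k) * (indicator {0..1} t * (\<psi> l k t * \<psi> l' k' t)))" for t
      unfolding s_def PS_def lev_def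
      by (simp add: sum_distrib_left sum_distrib_right algebra_simps)
    then have sL: "s L = (\<lambda>t. \<Sum>l<L. \<Sum>k<2 ^ l. \<theta> (l, k) * (indicator {0..1} t * (\<psi> l k t * \<psi> l' k' t)))"
      by (intro ext)
    have "integral\<^sup>L lborel (s L) = (\<Sum>l<L. \<Sum>k<2 ^ l. \<theta> (l, k) * integral\<^sup>L lborel (\<lambda>t. indicator {0..1} t * (\<psi> l k t * \<psi> l' k' t)))"
      unfolding sL
      apply (rule trans, rule Bochner_Integration.integral_sum)
       apply (intro Bochner_Integration.integrable_sum Bochner_Integration.integrable_mult_right int_psi_prod k'; simp)
      apply (intro sum.cong refl)
      apply (rule trans, rule Bochner_Integration.integral_sum)
       apply (intro Bochner_Integration.integrable_mult_right int_psi_prod k'; simp)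
      apply (intro sum.cong refl integral_mult_right_zero)
      done
    also have "\<dots> = (\<Sum>l<L. \<Sum>k<2 ^ l. \<theta> (l, k) * (if (l, k) = (l', k') then 1 else 0))"
      using orth[OF _ k'] by (intro sum.cong refl) (simp add: set_lebesgue_integral_def)
    also have "\<dots> = (\<Sum>l<L. if l = l' then \<theta> (l', k') else 0)"
    proof (intro sum.cong refl)
      fix l
      show "(\<Sum>k<2 ^ l. \<theta> (l, k) * (if (l, k) = (l', k') then 1 else 0)) = (if l = l' then \<theta> (l', k') else 0)"
        using k' by (cases "l = l'") (auto simp: if_distrib cong: if_cong)
    qed
    also have "\<dots> = (if l' < L then \<theta> (l', k') else 0)" by simp
    finally show ?thesis .
  qed
  have "(\<lambda>L. integral\<^sup>L lborel (s L)) \<longlonglongrightarrow> \<theta> (l', k')"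
  proof (rule tendsto_eventually)
    show "\<forall>\<^sub>F L in sequentially. integral\<^sup>L lborel (s L) = \<theta> (l', k')"
      using eventually_gt_at_top[of l'] by eventually_elim (simp add: sint)
  qed
  then have "integral\<^sup>L lborel F = \<theta> (l', k')" using conv LIMSEQ_unique by blast
  moreover have "F = (\<lambda>x. indicator {0..1} x * (wsynth \<psi> \<theta> x * \<psi> l' k' x))"
    by (simp add: F_def fun_eq_iff)
  ultimately show ?thesis by (simp add: set_lebesgue_integral_def)
qed

end


context wv begin

lemma f0_eq:
  assumes f0m: "f0 \<in> borel_measurable lborel"
    and f0b: "AE t in lborel. t \<in> {0..1} \<longrightarrow> \<bar>f0 t\<bar> \<le> K"
    and cdef: "\<And>l k. k < 2 ^ l \<Longrightarrow> c (l, k) = wcoef \<psi> f0 l k"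
    and cb: "cb A c"
  shows "AE t in lborel. t \<in> {0..1} \<longrightarrow> wsynth \<psi> c t = f0 t"
proof -
  define G where "G t = indicator {0..1} t * wsynth \<psi> c t" for t
  have lim: "(\<lambda>L. indicator {0..1} t * PS c L t) \<longlonglongrightarrow> G t" for t
  proof (cases "t \<in> {0..1}")
    case True
    then show ?thesis unfolding G_def by (intro tendsto_mult tendsto_const PS_tendsto[OF cb]) auto
  qed (simp add: G_def)
  have Gm[measurable]: "G \<in> borel_measurable lborel"
    by (rule borel_measurable_LIMSEQ_real[OF lim]) simp
  define g where "g t = G t - f0 t" for t
  have gm[measurable]: "g \<in> borel_measurable lborel" unfolding g_def using f0m by measurable
  have Gb: "t \<in> {0..1} \<Longrightarrow> \<bar>G t\<bar> \<le> A * C / (1 - q)" for t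
    using wsynth_bound[OF cb] by (simp add: G_def)
  have "AE t in lborel. t \<in> {0..1} \<longrightarrow> \<bar>(g t)\<^sup>2\<bar> \<le> (A * C / (1 - q) + K)\<^sup>2"
    using f0b
  proof eventually_elim
    case (elim t)
    show ?case
    proof
      assume t: "t \<in> {0..1}"
      have "\<bar>g t\<bar> \<le> A * C / (1 - q) + K" using Gb[OF t] elim t unfolding g_def by linarith
      then have "\<bar>g t\<bar>\<^sup>2 \<le> (A * C / (1 - q) + K)\<^sup>2" by (intro power_mono) auto
      then show "\<bar>(g t)\<^sup>2\<bar> \<le> (A * C / (1 - q) + K)\<^sup>2" by simp
    qed
  qed
  then have sq: "set_integrable lborel {0..1} (\<lambda>t. (g t)\<^sup>2)"
    unfolding set_integrable_def by (simp add: int01_bounded)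
  have coef0: "(LINT t:{0..1}|lborel. g t * \<psi> l k t) = 0" if k: "k < 2 ^ l" for l k
  proof -
    have i1: "integrable lborel (\<lambda>t. indicator {0..1} t * (G t * \<psi> l k t))"
    proof (rule int01_bounded)
      show "(\<lambda>t. G t * \<psi> l k t) \<in> borel_measurable lborel" using meas by measurable
      show "AE t in lborel. t \<in> {0..1} \<longrightarrow> \<bar>G t * \<psi> l k t\<bar> \<le> A * C / (1 - q) * (C * 2 powr (real l / 2))"
      proof (intro AE_I2 impI)
        fix t :: real assume t: "t \<in> {0..1}"
        have "0 \<le> A * C / (1 - q)" using cb_nonneg[OF cb] Cpos q_lt1 by simp
        then show "\<bar>G t * \<psi> l k t\<bar> \<le> A * C / (1 - q) * (C * 2 powr (real l / 2))"
          unfolding abs_mult using Gb[OF t] supb[OF k t] by (intro mult_mono) auto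
      qed
    qed
    have i2: "integrable lborel (\<lambda>t. indicator {0..1} t * (f0 t * \<psi> l k t))"
    proof (rule int01_bounded)
      show "(\<lambda>t. f0 t * \<psi> l k t) \<in> borel_measurable lborel" using meas f0m by measurable
      show "AE t in lborel. t \<in> {0..1} \<longrightarrow> \<bar>f0 t * \<psi> l k t\<bar> \<le> K * (C * 2 powr (real l / 2))"
        using f0b
      proof eventually_elim
        case (elim t)
        then show ?case
          using supb[OF k, of t] by (auto simp: abs_mult intro!: mult_mono order.trans[OF abs_ge_zero])
      qed
    qed
    have e1: "(\<lambda>t. indicator {0..1} t * (G t * \<psi> l k t)) = (\<lambda>t. indicator {0..1} t *\<^sub>R (wsynth \<psi> c t * \<psi> l k t))"
      by (auto simp: G_def indicator_def fun_eq_iff)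
    have "(LINT t:{0..1}|lborel. g t * \<psi> l k t)
        = integral\<^sup>L lborel (\<lambda>t. indicator {0..1} t * (G t * \<psi> l k t) - indicator {0..1} t * (f0 t * \<psi> l k t))"
      unfolding set_lebesgue_integral_def g_def by (simp add: algebra_simps)
    also have "\<dots> = integral\<^sup>L lborel (\<lambda>t. indicator {0..1} t * (G t * \<psi> l k t)) - integral\<^sup>L lborel (\<lambda>t. indicator {0..1} t * (f0 t * \<psi> l k t))"
      by (rule Bochner_Integration.integral_diff[OF i1 i2])
    also have "integral\<^sup>L lborel (\<lambda>t. indicator {0..1} t * (G t * \<psi> l k t)) = c (l, k)"
      unfolding e1 using coef_id[OF cb k] by (simp add: set_lebesgue_integral_def)
    also have "integral\<^sup>L lborel (\<lambda>t. indicator {0..1} t * (f0 t * \<psi> l k t)) = c (l, k)"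
      using cdef[OF k] by (simp add: wcoef_def set_lebesgue_integral_def)
    finally show ?thesis by simp
  qed
  have "AE t in lborel. t \<in> {0..1} \<longrightarrow> g t = 0"
    using compl[OF gm sq] coef0 by blast
  then show ?thesis
    by eventually_elim (auto simp: g_def G_def)
qed

end


context wv begin

definition Gam :: "real \<Rightarrow> real \<Rightarrow> nat \<Rightarrow> (nat \<times> nat \<Rightarrow> real) \<Rightarrow> (nat \<times> nat \<Rightarrow> real) \<Rightarrow> real" where
  "Gam B \<tau> m c \<theta> = (\<Sum>l<m. C * 2 powr (real l / 2) * \<tau> + (\<Sum>k<2 ^ l. C * 2 powr (real l / 2) * hh (c (l, k)) \<tau> (\<theta> (l, k))))
      + 2 * B * C * q ^ m / (1 - q)"

lemma pointwise_bound:
  assumes cbt: "cb B \<theta>" and cbc: "cb R c" and RB: "R \<le> B" and tau: "\<tau> \<ge> 0"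
    and t: "t \<in> {0..1}"
  shows "\<bar>wsynth \<psi> \<theta> t - wsynth \<psi> c t\<bar> \<le> Gam B \<tau> m c \<theta>"
proof -
  define d where "d l = lev \<theta> l t - lev c l t" for l
  define w where "w l = C * 2 powr (real l / 2)" for l
  define \<beta> where "\<beta> l = (if l < m then w l * \<tau> + (\<Sum>k<2 ^ l. w l * hh (c (l, k)) \<tau> (\<theta> (l, k))) else 2 * B * C * q ^ l)" for l
  have w0: "w l \<ge> 0" for l using Cpos by (simp add: w_def)
  have dsums: "d sums (wsynth \<psi> \<theta> t - wsynth \<psi> c t)"
    unfolding d_def by (intro sums_diff wsynth_sums[OF cbt t] wsynth_sums[OF cbc t])
  have dif: "\<bar>\<theta> (l, k) - c (l, k)\<bar> \<le> 2 * B * sg l" if "k < 2 ^ l" for l k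
  proof -
    have "\<bar>\<theta> (l, k)\<bar> \<le> B * sg l" "\<bar>c (l, k)\<bar> \<le> R * sg l"
      using cbt cbc that unfolding cb_def by auto
    moreover have "R * sg l \<le> B * sg l" using RB sg_pos[of l] by (intro mult_right_mono) auto
    ultimately show ?thesis by linarith
  qed
  have dabs: "\<bar>d l\<bar> \<le> (\<Sum>k<2 ^ l. \<bar>\<theta> (l, k) - c (l, k)\<bar> * \<bar>\<psi> l k t\<bar>)" for l
  proof -
    have "d l = (\<Sum>k<2 ^ l. (\<theta> (l, k) - c (l, k)) * \<psi> l k t)"
      unfolding d_def lev_def by (simp add: sum_subtractf algebra_simps)
    then have "\<bar>d l\<bar> \<le> (\<Sum>k<2 ^ l. \<bar>(\<theta> (l, k) - c (l, k)) * \<psi> l k t\<bar>)"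
      by (simp only: sum_abs)
    then show ?thesis by (simp add: abs_mult)
  qed
  have db: "\<bar>d l\<bar> \<le> \<beta> l" for l
  proof (cases "l < m")
    case True
    have "(\<Sum>k<2 ^ l. \<bar>\<theta> (l, k) - c (l, k)\<bar> * \<bar>\<psi> l k t\<bar>)
        \<le> (\<Sum>k<2 ^ l. (\<tau> + hh (c (l, k)) \<tau> (\<theta> (l, k))) * \<bar>\<psi> l k t\<bar>)"
      using tau by (intro sum_mono mult_right_mono) (auto simp: hh_def abs_minus_commute)
    also have "\<dots> = \<tau> * (\<Sum>k<2 ^ l. \<bar>\<psi> l k t\<bar>) + (\<Sum>k<2 ^ l. hh (c (l, k)) \<tau> (\<theta> (l, k)) * \<bar>\<psi> l k t\<bar>)"
      by (simp add: algebra_simps sum.distrib sum_distrib_left)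
    also have "\<dots> \<le> \<tau> * w l + (\<Sum>k<2 ^ l. hh (c (l, k)) \<tau> (\<theta> (l, k)) * w l)"
      using sumb[OF t, of l] supb[OF _ t] tau hh_nonneg
      by (intro add_mono mult_left_mono sum_mono) (auto simp: w_def)
    also have "\<dots> = \<beta> l" using True by (simp add: \<beta>_def algebra_simps)
    finally show ?thesis using dabs[of l] by linarith
  next
    case False
    have "(\<Sum>k<2 ^ l. \<bar>\<theta> (l, k) - c (l, k)\<bar> * \<bar>\<psi> l k t\<bar>) \<le> (\<Sum>k<2 ^ l. 2 * B * sg l * \<bar>\<psi> l k t\<bar>)"
      using dif by (intro sum_mono mult_right_mono) auto
    also have "\<dots> = 2 * B * sg l * (\<Sum>k<2 ^ l. \<bar>\<psi> l k t\<bar>)" by (simp add: sum_distrib_left)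
    also have "\<dots> \<le> 2 * B * sg l * w l"
      using sumb[OF t, of l] cb_nonneg[OF cbt] sg_pos[of l] by (intro mult_left_mono) (auto simp: w_def)
    also have "\<dots> = \<beta> l" using False sg_q[of l] by (simp add: \<beta>_def w_def algebra_simps)
    finally show ?thesis using dabs[of l] by linarith
  qed
  have shift: "\<beta> (l + m) = (2 * B * C * q ^ m) * q ^ l" for l
    by (simp add: \<beta>_def power_add algebra_simps)
  have sb: "summable \<beta>"
    using summable_geo[of "2 * B * C * q ^ m"] by (subst summable_iff_shift[of _ m, symmetric]) (simp add: shift)
  have "\<bar>wsynth \<psi> \<theta> t - wsynth \<psi> c t\<bar> = norm (suminf d)" using sums_unique[OF dsums] by simp
  also have "\<dots> \<le> suminf \<beta>" by (rule norm_suminf_le) (use db sb in auto)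
  also have "\<dots> = (\<Sum>l. \<beta> (l + m)) + sum \<beta> {..<m}" by (rule suminf_split_initial_segment[OF sb])
  also have "(\<Sum>l. \<beta> (l + m)) = 2 * B * C * q ^ m / (1 - q)"
    unfolding shift by (rule suminf_geo)
  also have "sum \<beta> {..<m} = (\<Sum>l<m. C * 2 powr (real l / 2) * \<tau> + (\<Sum>k<2 ^ l. C * 2 powr (real l / 2) * hh (c (l, k)) \<tau> (\<theta> (l, k))))"
    by (intro sum.cong refl) (simp add: \<beta>_def w_def)
  finally show ?thesis by (simp add: Gam_def)
qed

end


context wv begin

lemma wsynth_meas01:
  assumes "cb A \<theta>"
  shows "wsynth \<psi> \<theta> \<in> borel_measurable (restrict_space lborel {0..1})"
proof (rule borel_measurable_LIMSEQ_real)
  fix x assume "x \<in> space (restrict_space lborel {0..1::real})"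
  then have "x \<in> {0..1}" by (simp add: space_restrict_space)
  then show "(\<lambda>L. PS \<theta> L x) \<longlonglongrightarrow> wsynth \<psi> \<theta> x" by (rule PS_tendsto[OF assms])
next
  fix L show "PS \<theta> L \<in> borel_measurable (restrict_space lborel {0..1})"
    by (rule measurable_restrict_space1) simp
qed

lemma Linf_bound:
  assumes f0m: "f0 \<in> borel_measurable lborel"
    and eq: "AE t in lborel. t \<in> {0..1} \<longrightarrow> wsynth \<psi> c t = f0 t"
    and cbt: "cb B \<theta>" and cbc: "cb R c" and RB: "R \<le> B" and tau: "\<tau> \<ge> 0"
  shows "Linf_norm01 (\<lambda>t. wsynth \<psi> \<theta> t - f0 t) \<le> ennreal (Gam B \<tau> m c \<theta>)"
  unfolding Linf_norm01_def
proof (rule esssup_I)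
  have "f0 \<in> borel_measurable (restrict_space lborel {0..1})"
    by (rule measurable_restrict_space1[OF f0m])
  then show "(\<lambda>t. ennreal \<bar>wsynth \<psi> \<theta> t - f0 t\<bar>) \<in> borel_measurable (restrict_space lborel {0..1})"
    using wsynth_meas01[OF cbt] by measurable
  show "AE t in restrict_space lborel {0..1}. ennreal \<bar>wsynth \<psi> \<theta> t - f0 t\<bar> \<le> ennreal (Gam B \<tau> m c \<theta>)"
    apply (subst AE_restrict_space_iff)
     apply simp
    using eq
  proof eventually_elim
    case (elim t)
    show ?case
    proof
      assume t: "t \<in> {0..1}"
      show "ennreal \<bar>wsynth \<psi> \<theta> t - f0 t\<bar> \<le> ennreal (Gam B \<tau> m c \<theta>)"
        using pointwise_bound[OF cbt cbc RB tau t, of m] elim t by (intro ennreal_leI) simp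
    qed
  qed
qed

end


lemma PiM_marginal:
  assumes M: "\<And>i. i \<in> I \<Longrightarrow> prob_space (M i)" and i: "i \<in> I"
    and g: "g \<in> borel_measurable (M i)"
  shows "(\<integral>\<^sup>+ \<theta>. g (\<theta> i) \<partial>PiM I M) = (\<integral>\<^sup>+ u. g u \<partial>M i)"
proof -
  have D: "distr (PiM I M) (M i) (\<lambda>\<omega>. \<omega> i) = M i" by (rule distr_PiM_component[OF M i])
  have "(\<integral>\<^sup>+ \<theta>. g (\<theta> i) \<partial>PiM I M) = (\<integral>\<^sup>+ u. g u \<partial>distr (PiM I M) (M i) (\<lambda>\<omega>. \<omega> i))"
    by (rule nn_integral_distr[symmetric]) (use i g in \<open>auto simp: D\<close>)
  also have "\<dots> = (\<integral>\<^sup>+ u. g u \<partial>M i)" by (simp only: D)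
  finally show ?thesis .
qed

lemma countable_wav: "countable wav_idx" by (rule countableI_type)

context wv begin

lemma sigma_sg: "sigma_l \<alpha> l = sg l" by (simp add: sigma_l_def sg_def)

lemma Gam_split:
  "Gam B \<tau> m c \<theta> = ((\<Sum>l<m. C * 2 powr (real l / 2) * \<tau>) + 2 * B * C * q ^ m / (1 - q))
     + (\<Sum>l<m. \<Sum>k<2 ^ l. C * 2 powr (real l / 2) * hh (c (l, k)) \<tau> (\<theta> (l, k)))"
  by (simp add: Gam_def sum.distrib)

definition PP :: "real \<Rightarrow> nat \<Rightarrow> (nat \<times> nat \<Rightarrow> real) \<Rightarrow> (nat \<times> nat \<Rightarrow> real) measure" where
  "PP B n x = PiM wav_idx (\<lambda>(l, k). post_coord B (sg l) n (x (l, k)))"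

lemma PP_prob: "B > 0 \<Longrightarrow> i \<in> wav_idx \<Longrightarrow> prob_space ((\<lambda>(l, k). post_coord B (sg l) n (x (l, k))) i)"
  by (cases i) (auto intro!: prob_post sg_pos)

lemma AE_PP_cb:
  assumes "B > 0"
  shows "AE \<theta> in PP B n x. cb B \<theta>"
proof -
  have "AE \<theta> in PP B n x. \<forall>i\<in>wav_idx. \<bar>\<theta> i\<bar> \<le> B * sg (fst i)"
  proof (subst AE_ball_countable[OF countable_wav], intro ballI)
    fix i assume i: "i \<in> wav_idx"
    obtain l k where lk: "i = (l, k)" by (cases i)
    have "AE \<theta> in PP B n x. \<bar>\<theta> (l, k)\<bar> \<le> B * sg l"
      unfolding PP_def
    proof (rule AE_PiM_component[OF PP_prob[OF assms]])
      show "(l, k) \<in> wav_idx" using i lk by simp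
      show "AE u in (\<lambda>(l, k). post_coord B (sg l) n (x (l, k))) (l, k). \<bar>u\<bar> \<le> B * sg l"
        unfolding prod.case by (rule AE_post_supp[OF assms sg_pos])
    qed
    then show "AE \<theta> in PP B n x. \<bar>\<theta> i\<bar> \<le> B * sg (fst i)" by (simp add: lk)
  qed
  then show ?thesis
    by eventually_elim (auto simp: cb_def wav_idx_def)
qed

lemma inner_bound:
  assumes B: "B > 0" and f0m: "f0 \<in> borel_measurable lborel"
    and eq: "AE t in lborel. t \<in> {0..1} \<longrightarrow> wsynth \<psi> c t = f0 t"
    and cbc: "cb R c" and RB: "R \<le> B" and tau: "\<tau> \<ge> 0"
  shows "(\<integral>\<^sup>+ \<theta>. Linf_norm01 (\<lambda>t. wsynth \<psi> \<theta> t - f0 t) \<partial>PP B n x)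
     \<le> ennreal ((\<Sum>l<m. C * 2 powr (real l / 2) * \<tau>) + 2 * B * C * q ^ m / (1 - q))
       + (\<Sum>l<m. \<Sum>k<2 ^ l. ennreal (C * 2 powr (real l / 2)) *
            (\<integral>\<^sup>+ u. ennreal (hh (c (l, k)) \<tau> u) \<partial>post_coord B (sg l) n (x (l, k))))"
proof -
  define A0 where "A0 = (\<Sum>l<m. C * 2 powr (real l / 2) * \<tau>) + 2 * B * C * q ^ m / (1 - q)"
  have A0: "A0 \<ge> 0" unfolding A0_def using Cpos tau q_lt1 B q_pos
    by (intro add_nonneg_nonneg sum_nonneg) auto
  interpret P: prob_space "PP B n x"
    unfolding PP_def by (intro prob_space_PiM PP_prob[OF B])
  have "(\<integral>\<^sup>+ \<theta>. Linf_norm01 (\<lambda>t. wsynth \<psi> \<theta> t - f0 t) \<partial>PP B n x)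
      \<le> (\<integral>\<^sup>+ \<theta>. ennreal (Gam B \<tau> m c \<theta>) \<partial>PP B n x)"
    using AE_PP_cb[OF B, of n x]
    by (intro nn_integral_mono_AE) (auto elim!: eventually_mono intro: Linf_bound[OF f0m eq _ cbc RB tau])
  also have "\<dots> = (\<integral>\<^sup>+ \<theta>. ennreal A0 + (\<Sum>l<m. \<Sum>k<2 ^ l. ennreal (C * 2 powr (real l / 2)) * ennreal (hh (c (l, k)) \<tau> (\<theta> (l, k)))) \<partial>PP B n x)"
  proof (intro nn_integral_cong)
    fix \<theta>
    show "ennreal (Gam B \<tau> m c \<theta>) = ennreal A0 + (\<Sum>l<m. \<Sum>k<2 ^ l. ennreal (C * 2 powr (real l / 2)) * ennreal (hh (c (l, k)) \<tau> (\<theta> (l, k))))"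
      unfolding Gam_split A0_def[symmetric] using A0 Cpos hh_nonneg
      by (simp add: ennreal_plus sum_nonneg ennreal_mult'[symmetric] sum_ennreal)
  qed
  also have "\<dots> = ennreal A0 + (\<Sum>l<m. \<Sum>k<2 ^ l. ennreal (C * 2 powr (real l / 2)) *
            (\<integral>\<^sup>+ u. ennreal (hh (c (l, k)) \<tau> u) \<partial>post_coord B (sg l) n (x (l, k))))"
  proof -
    have m1[measurable]: "(\<lambda>\<theta>. ennreal (hh (c (l, k)) \<tau> (\<theta> (l, k)))) \<in> borel_measurable (PP B n x)"
      if "k < 2 ^ l" for l k
    proof -
      have "(l, k) \<in> wav_idx" using that by (simp add: wav_idx_def)
      then have "(\<lambda>\<theta>. \<theta> (l, k)) \<in> PP B n x \<rightarrow>\<^sub>M (\<lambda>(l, k). post_coord B (sg l) n (x (l, k))) (l, k)"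
        unfolding PP_def by (rule measurable_component_singleton)
      then have "(\<lambda>\<theta>. \<theta> (l, k)) \<in> borel_measurable (PP B n x)"
        by (subst measurable_cong_sets[OF refl sets_post[symmetric]]) simp
      then show ?thesis by measurable
    qed
    have "(\<integral>\<^sup>+ \<theta>. ennreal A0 + (\<Sum>l<m. \<Sum>k<2 ^ l. ennreal (C * 2 powr (real l / 2)) * ennreal (hh (c (l, k)) \<tau> (\<theta> (l, k)))) \<partial>PP B n x)
      = ennreal A0 + (\<Sum>l<m. \<Sum>k<2 ^ l. ennreal (C * 2 powr (real l / 2)) * (\<integral>\<^sup>+ \<theta>. ennreal (hh (c (l, k)) \<tau> (\<theta> (l, k))) \<partial>PP B n x))"
    proof -
      have ms: "(\<lambda>\<theta>. \<Sum>l<m. \<Sum>k<2 ^ l. ennreal (C * 2 powr (real l / 2)) * ennreal (hh (c (l, k)) \<tau> (\<theta> (l, k)))) \<in> borel_measurable (PP B n x)"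
        by (intro borel_measurable_sum borel_measurable_times_ennreal borel_measurable_const m1) auto
      have "(\<integral>\<^sup>+ \<theta>. ennreal A0 + (\<Sum>l<m. \<Sum>k<2 ^ l. ennreal (C * 2 powr (real l / 2)) * ennreal (hh (c (l, k)) \<tau> (\<theta> (l, k)))) \<partial>PP B n x)
        = (\<integral>\<^sup>+ \<theta>. ennreal A0 \<partial>PP B n x) + (\<integral>\<^sup>+ \<theta>. (\<Sum>l<m. \<Sum>k<2 ^ l. ennreal (C * 2 powr (real l / 2)) * ennreal (hh (c (l, k)) \<tau> (\<theta> (l, k)))) \<partial>PP B n x)"
        by (rule nn_integral_add[OF _ ms]) simp
      also have "(\<integral>\<^sup>+ \<theta>. ennreal A0 \<partial>PP B n x) = ennreal A0"
        using P.emeasure_space_1 by simp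
      also have "(\<integral>\<^sup>+ \<theta>. (\<Sum>l<m. \<Sum>k<2 ^ l. ennreal (C * 2 powr (real l / 2)) * ennreal (hh (c (l, k)) \<tau> (\<theta> (l, k)))) \<partial>PP B n x)
         = (\<Sum>l<m. \<Sum>k<2 ^ l. ennreal (C * 2 powr (real l / 2)) * (\<integral>\<^sup>+ \<theta>. ennreal (hh (c (l, k)) \<tau> (\<theta> (l, k))) \<partial>PP B n x))"
        apply (subst nn_integral_sum)
         apply (intro borel_measurable_sum borel_measurable_times_ennreal borel_measurable_const m1; simp)
        apply (intro sum.cong refl)
        apply (subst nn_integral_sum)
         apply (intro borel_measurable_times_ennreal borel_measurable_const m1; simp)
        apply (intro sum.cong refl)
        apply (subst nn_integral_cmult)
         apply (intro m1; simp)
        apply (rule refl)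
        done
      finally show ?thesis .
    qed
    also have "\<dots> = ennreal A0 + (\<Sum>l<m. \<Sum>k<2 ^ l. ennreal (C * 2 powr (real l / 2)) *
            (\<integral>\<^sup>+ u. ennreal (hh (c (l, k)) \<tau> u) \<partial>post_coord B (sg l) n (x (l, k))))"
    proof (intro arg_cong2[where f="(+)"] refl sum.cong arg_cong2[where f="(*)"])
      fix l k :: nat assume "l \<in> {..<m}" "k \<in> {..<2 ^ l}"
      then have i: "(l, k) \<in> wav_idx" by (simp add: wav_idx_def)
      show "(\<integral>\<^sup>+ \<theta>. ennreal (hh (c (l, k)) \<tau> (\<theta> (l, k))) \<partial>PP B n x)
          = (\<integral>\<^sup>+ u. ennreal (hh (c (l, k)) \<tau> u) \<partial>post_coord B (sg l) n (x (l, k)))"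
        unfolding PP_def
        by (subst PiM_marginal[OF PP_prob[OF B] i]) auto
    qed
    finally show ?thesis .
  qed
  finally show ?thesis unfolding A0_def .
qed

end


context wv begin

definition Phi :: "real \<Rightarrow> real \<Rightarrow> real \<Rightarrow> real \<Rightarrow> nat \<Rightarrow> nat \<Rightarrow> real \<Rightarrow> real" where
  "Phi B R \<tau> u0 n l e = 2 * B * sg l * indicator {e. u0 < \<bar>e\<bar>} e
     + 2 * (B * sg l)\<^sup>2 / min (\<tau> / 4) ((B - R) * sg l) * exp (- 5 * real n * \<tau>\<^sup>2 / 32)"

lemma coord_bound:
  assumes B: "B > R" and R: "R \<ge> 0" and cl: "\<bar>cc\<bar> \<le> R * sg l" and tau: "\<tau> > 0" and n: "n > 0"
  shows "(\<integral>\<^sup>+ u. ennreal (hh cc \<tau> u) \<partial>post_coord B (sg l) n (cc + e / sqrt (real n)))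
     \<le> ennreal (Phi B R \<tau> (sqrt (real n) * \<tau> / 4) n l e)"
proof -
  have B0: "B > 0" using B R by simp
  define E where "E = 2 * (B * sg l)\<^sup>2 / min (\<tau> / 4) ((B - R) * sg l) * exp (- 5 * real n * \<tau>\<^sup>2 / 32)"
  have E0: "E \<ge> 0" unfolding E_def using B sg_pos[of l] tau by simp
  have sn: "sqrt (real n) > 0" using n by simp
  have PhiE: "Phi B R \<tau> (sqrt (real n) * \<tau> / 4) n l e = 2 * B * sg l * indicator {e. sqrt (real n) * \<tau> / 4 < \<bar>e\<bar>} e + E"
    unfolding Phi_def E_def ..
  have I0: "0 \<le> 2 * B * sg l * indicator {e. sqrt (real n) * \<tau> / 4 < \<bar>e\<bar>} e"
    using B0 sg_pos[of l] by (simp add: indicator_def)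
  show ?thesis
  proof (cases "\<bar>cc + e / sqrt (real n) - cc\<bar> \<le> \<tau> / 4")
    case True
    have "(\<integral>\<^sup>+ u. ennreal (hh cc \<tau> u) \<partial>post_coord B (sg l) n (cc + e / sqrt (real n))) \<le> ennreal E"
      unfolding E_def by (rule post_tail[OF B0 sg_pos B cl tau True])
    also have "\<dots> \<le> ennreal (Phi B R \<tau> (sqrt (real n) * \<tau> / 4) n l e)"
      unfolding PhiE using I0 by (intro ennreal_leI) simp
    finally show ?thesis .
  next
    case False
    then have "\<tau> / 4 < \<bar>e\<bar> / sqrt (real n)" by (simp add: abs_divide)
    then have "\<tau> / 4 * sqrt (real n) < \<bar>e\<bar>" using sn by (simp add: pos_less_divide_eq)
    then have u: "sqrt (real n) * \<tau> / 4 < \<bar>e\<bar>" by (simp add: algebra_simps)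
    have "(\<integral>\<^sup>+ u. ennreal (hh cc \<tau> u) \<partial>post_coord B (sg l) n (cc + e / sqrt (real n))) \<le> ennreal (2 * B * sg l)"
    proof (rule post_int_bounded[OF B0 sg_pos])
      fix u assume "\<bar>u\<bar> \<le> B * sg l"
      moreover have "R * sg l \<le> B * sg l" using B sg_pos[of l] by (intro mult_right_mono) auto
      moreover have "0 \<le> B * sg l" using B0 sg_pos[of l] by simp
      ultimately show "hh cc \<tau> u \<le> 2 * B * sg l" using cl by (auto simp: hh_def)
    qed simp
    also have "\<dots> \<le> ennreal (Phi B R \<tau> (sqrt (real n) * \<tau> / 4) n l e)"
      unfolding PhiE using u E0 by (intro ennreal_leI) simp
    finally show ?thesis .
  qed
qed

lemma noise_prob: "prob_space noise"
  unfolding noise_def by (intro prob_space_PiM std_prob)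

lemma noise_comp[measurable]:
  assumes "k < 2 ^ l"
  shows "(\<lambda>\<epsilon>. \<epsilon> (l, k)) \<in> borel_measurable noise"
proof -
  have "(l, k) \<in> wav_idx" using assms by (simp add: wav_idx_def)
  then have "(\<lambda>\<epsilon>. \<epsilon> (l, k)) \<in> noise \<rightarrow>\<^sub>M density lborel (\<lambda>x. ennreal (std_normal_density x))"
    unfolding noise_def by (rule measurable_component_singleton)
  then show ?thesis
    by (subst measurable_cong_sets[OF refl, of _ "density lborel (\<lambda>x. ennreal (std_normal_density x))"]) auto
qed

lemma outer_bound:
  assumes B: "B > R" and R: "R \<ge> 0" and f0m: "f0 \<in> borel_measurable lborel"
    and eq: "AE t in lborel. t \<in> {0..1} \<longrightarrow> wsynth \<psi> c t = f0 t"
    and cbc: "cb R c" and cdef: "\<And>l k. c (l, k) = wcoef \<psi> f0 l k"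
    and tau: "\<tau> > 0" and n: "n > 0"
  shows "(\<integral>\<^sup>+ \<epsilon>. (\<integral>\<^sup>+ \<theta>. Linf_norm01 (\<lambda>t. wsynth \<psi> \<theta> t - f0 t)
                  \<partial>posterior \<alpha> B n (observ \<psi> f0 n \<epsilon>)) \<partial>noise)
     \<le> ennreal (((\<Sum>l<m. C * 2 powr (real l / 2) * \<tau>) + 2 * B * C * q ^ m / (1 - q))
          + (\<Sum>l<m. \<Sum>k<(2::nat) ^ l. C * 2 powr (real l / 2) *
              (2 * B * sg l * (sqrt 2 * exp (- (sqrt (real n) * \<tau> / 4)\<^sup>2 / 4))
               + 2 * (B * sg l)\<^sup>2 / min (\<tau> / 4) ((B - R) * sg l) * exp (- 5 * real n * \<tau>\<^sup>2 / 32))))"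
proof -
  define A0 where "A0 = (\<Sum>l<m. C * 2 powr (real l / 2) * \<tau>) + 2 * B * C * q ^ m / (1 - q)"
  define u0 where "u0 = sqrt (real n) * \<tau> / 4"
  define E where "E l = 2 * (B * sg l)\<^sup>2 / min (\<tau> / 4) ((B - R) * sg l) * exp (- 5 * real n * \<tau>\<^sup>2 / 32)" for l
  have B0: "B > 0" using B R by simp
  have A0: "A0 \<ge> 0" unfolding A0_def using Cpos tau q_lt1 B0 q_pos
    by (intro add_nonneg_nonneg sum_nonneg) auto
  have E0: "E l \<ge> 0" for l unfolding E_def using B sg_pos[of l] tau by simp
  have u00: "u0 \<ge> 0" unfolding u0_def using tau by simp
  have w0: "C * 2 powr (real l / 2) \<ge> 0" for l using Cpos by simp
  have PhiE: "Phi B R \<tau> u0 n l e = 2 * B * sg l * indicator {e. u0 < \<bar>e\<bar>} e + E l" for l e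
    unfolding Phi_def E_def ..
  interpret N: prob_space noise by (rule noise_prob)
  have post: "posterior \<alpha> B n X = PP B n X" for X
    unfolding posterior_def PP_def sigma_sg ..
  have obs: "observ \<psi> f0 n \<epsilon> (l, k) = c (l, k) + \<epsilon> (l, k) / sqrt (real n)" for \<epsilon> l k
    by (simp add: observ_def cdef)
  have cl: "\<bar>c (l, k)\<bar> \<le> R * sg l" if "k < 2 ^ l" for l k using cbc that by (simp add: cb_def)
  have step1: "(\<integral>\<^sup>+ \<theta>. Linf_norm01 (\<lambda>t. wsynth \<psi> \<theta> t - f0 t) \<partial>posterior \<alpha> B n (observ \<psi> f0 n \<epsilon>))
      \<le> ennreal A0 + (\<Sum>l<m. \<Sum>k<2 ^ l. ennreal (C * 2 powr (real l / 2)) * ennreal (Phi B R \<tau> u0 n l (\<epsilon> (l, k))))" for \<epsilon>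
  proof -
    have "(\<integral>\<^sup>+ \<theta>. Linf_norm01 (\<lambda>t. wsynth \<psi> \<theta> t - f0 t) \<partial>posterior \<alpha> B n (observ \<psi> f0 n \<epsilon>))
      \<le> ennreal A0 + (\<Sum>l<m. \<Sum>k<2 ^ l. ennreal (C * 2 powr (real l / 2)) *
            (\<integral>\<^sup>+ u. ennreal (hh (c (l, k)) \<tau> u) \<partial>post_coord B (sg l) n (observ \<psi> f0 n \<epsilon> (l, k))))"
      unfolding post A0_def using inner_bound[OF B0 f0m eq cbc _ less_imp_le[OF tau]] B by simp
    also have "\<dots> \<le> ennreal A0 + (\<Sum>l<m. \<Sum>k<2 ^ l. ennreal (C * 2 powr (real l / 2)) * ennreal (Phi B R \<tau> u0 n l (\<epsilon> (l, k))))"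
    proof (intro add_left_mono sum_mono mult_left_mono)
      fix l k :: nat assume "l \<in> {..<m}" "k \<in> {..<2 ^ l}"
      then have k: "k < 2 ^ l" by simp
      show "(\<integral>\<^sup>+ u. ennreal (hh (c (l, k)) \<tau> u) \<partial>post_coord B (sg l) n (observ \<psi> f0 n \<epsilon> (l, k)))
          \<le> ennreal (Phi B R \<tau> u0 n l (\<epsilon> (l, k)))"
        unfolding obs u0_def by (rule coord_bound[OF B R cl[OF k] tau n])
    qed simp
    finally show ?thesis .
  qed
  have "(\<integral>\<^sup>+ \<epsilon>. (\<integral>\<^sup>+ \<theta>. Linf_norm01 (\<lambda>t. wsynth \<psi> \<theta> t - f0 t) \<partial>posterior \<alpha> B n (observ \<psi> f0 n \<epsilon>)) \<partial>noise)
      \<le> (\<integral>\<^sup>+ \<epsilon>. ennreal A0 + (\<Sum>l<m. \<Sum>k<2 ^ l. ennreal (C * 2 powr (real l / 2)) * ennreal (Phi B R \<tau> u0 n l (\<epsilon> (l, k)))) \<partial>noise)"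
    by (intro nn_integral_mono step1)
  also have "\<dots> = ennreal A0 + (\<Sum>l<m. \<Sum>k<2 ^ l. ennreal (C * 2 powr (real l / 2)) * (\<integral>\<^sup>+ \<epsilon>. ennreal (Phi B R \<tau> u0 n l (\<epsilon> (l, k))) \<partial>noise))"
  proof -
    have m1: "(\<lambda>\<epsilon>. ennreal (Phi B R \<tau> u0 n l (\<epsilon> (l, k)))) \<in> borel_measurable noise" if "k < 2 ^ l" for l k
      unfolding Phi_def using noise_comp[OF that] by measurable
    have ms: "(\<lambda>\<epsilon>. \<Sum>l<m. \<Sum>k<2 ^ l. ennreal (C * 2 powr (real l / 2)) * ennreal (Phi B R \<tau> u0 n l (\<epsilon> (l, k)))) \<in> borel_measurable noise"
      by (intro borel_measurable_sum borel_measurable_times_ennreal borel_measurable_const m1) auto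
    have "(\<integral>\<^sup>+ \<epsilon>. ennreal A0 + (\<Sum>l<m. \<Sum>k<2 ^ l. ennreal (C * 2 powr (real l / 2)) * ennreal (Phi B R \<tau> u0 n l (\<epsilon> (l, k)))) \<partial>noise)
      = (\<integral>\<^sup>+ \<epsilon>. ennreal A0 \<partial>noise) + (\<integral>\<^sup>+ \<epsilon>. (\<Sum>l<m. \<Sum>k<2 ^ l. ennreal (C * 2 powr (real l / 2)) * ennreal (Phi B R \<tau> u0 n l (\<epsilon> (l, k)))) \<partial>noise)"
      by (rule nn_integral_add[OF _ ms]) simp
    also have "(\<integral>\<^sup>+ \<epsilon>. ennreal A0 \<partial>noise) = ennreal A0"
      using N.emeasure_space_1 by simp
    also have "(\<integral>\<^sup>+ \<epsilon>. (\<Sum>l<m. \<Sum>k<2 ^ l. ennreal (C * 2 powr (real l / 2)) * ennreal (Phi B R \<tau> u0 n l (\<epsilon> (l, k)))) \<partial>noise)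
       = (\<Sum>l<m. \<Sum>k<2 ^ l. ennreal (C * 2 powr (real l / 2)) * (\<integral>\<^sup>+ \<epsilon>. ennreal (Phi B R \<tau> u0 n l (\<epsilon> (l, k))) \<partial>noise))"
      apply (subst nn_integral_sum)
       apply (intro borel_measurable_sum borel_measurable_times_ennreal borel_measurable_const m1; simp)
      apply (intro sum.cong refl)
      apply (subst nn_integral_sum)
       apply (intro borel_measurable_times_ennreal borel_measurable_const m1; simp)
      apply (intro sum.cong refl)
      apply (subst nn_integral_cmult)
       apply (intro m1; simp)
      apply (rule refl)
      done
    finally show ?thesis .
  qed
  also have "\<dots> \<le> ennreal A0 + (\<Sum>l<m. \<Sum>k<(2::nat) ^ l. ennreal (C * 2 powr (real l / 2)) *
        ennreal (2 * B * sg l * (sqrt 2 * exp (- u0\<^sup>2 / 4)) + E l))"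
  proof -
    have cb2: "(\<integral>\<^sup>+ \<epsilon>. ennreal (Phi B R \<tau> u0 n l (\<epsilon> (l, k))) \<partial>noise)
        \<le> ennreal (2 * B * sg l * (sqrt 2 * exp (- u0\<^sup>2 / 4)) + E l)" if "k < 2 ^ l" for l k :: nat
    proof -
      have i: "(l, k) \<in> wav_idx" using that by (simp add: wav_idx_def)
      have "(\<integral>\<^sup>+ \<epsilon>. ennreal (Phi B R \<tau> u0 n l (\<epsilon> (l, k))) \<partial>noise)
          = (\<integral>\<^sup>+ e. ennreal (Phi B R \<tau> u0 n l e) \<partial>density lborel (\<lambda>x. ennreal (std_normal_density x)))"
        unfolding noise_def
        by (rule PiM_marginal[OF std_prob i]) (simp add: Phi_def)
      also have "\<dots> \<le> ennreal (2 * B * sg l * (sqrt 2 * exp (- u0\<^sup>2 / 4)) + E l)"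
        unfolding PhiE using B0 sg_pos[of l] by (intro gauss_phi u00 E0) simp
      finally show ?thesis .
    qed
    show ?thesis by (intro add_left_mono sum_mono mult_left_mono cb2) auto
  qed
  also have "\<dots> = ennreal (A0 + (\<Sum>l<m. \<Sum>k<(2::nat) ^ l. C * 2 powr (real l / 2) * (2 * B * sg l * (sqrt 2 * exp (- u0\<^sup>2 / 4)) + E l)))"
  proof -
    have nn: "0 \<le> 2 * B * sg l * (sqrt 2 * exp (- u0\<^sup>2 / 4)) + E l" for l
      using B0 sg_pos[of l] E0[of l] by simp
    define g where "g l = C * 2 powr (real l / 2) * (2 * B * sg l * (sqrt 2 * exp (- u0\<^sup>2 / 4)) + E l)" for l
    have g0: "g l \<ge> 0" for l unfolding g_def using w0 nn by simp
    have "(\<Sum>l<m. \<Sum>k<(2::nat) ^ l. ennreal (C * 2 powr (real l / 2)) * ennreal (2 * B * sg l * (sqrt 2 * exp (- u0\<^sup>2 / 4)) + E l))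
        = (\<Sum>l<m. \<Sum>k<(2::nat) ^ l. ennreal (g l))"
      unfolding g_def using w0 nn by (intro sum.cong refl) (simp add: ennreal_mult)
    also have "\<dots> = (\<Sum>l<m. ennreal (\<Sum>k<(2::nat) ^ l. g l))"
      by (intro sum.cong refl sum_ennreal g0)
    also have "\<dots> = ennreal (\<Sum>l<m. \<Sum>k<(2::nat) ^ l. g l)"
      by (intro sum_ennreal sum_nonneg g0)
    finally have X: "(\<Sum>l<m. \<Sum>k<(2::nat) ^ l. ennreal (C * 2 powr (real l / 2)) * ennreal (2 * B * sg l * (sqrt 2 * exp (- u0\<^sup>2 / 4)) + E l))
        = ennreal (\<Sum>l<m. \<Sum>k<(2::nat) ^ l. g l)" .
    have "0 \<le> (\<Sum>l<m. \<Sum>k<(2::nat) ^ l. g l)" by (intro sum_nonneg g0)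
    then show ?thesis unfolding X g_def[symmetric] using A0 by (simp add: ennreal_plus)
  qed
  finally show ?thesis unfolding A0_def u0_def E_def .
qed

end


context wv begin

lemma numeric_parts:
  fixes n :: nat and B R :: real
  assumes n2: "n \<ge> 2" and B: "B > R" and R: "R > 0"
  defines "y \<equiv> ln (real n) / real n"
  defines "g \<equiv> \<alpha> / (2 * \<alpha> + 1)"
  defines "r \<equiv> y powr (1 / (2 * \<alpha> + 1))"
  defines "L \<equiv> nat \<lfloor>log 2 (1 / r)\<rfloor>"
  defines "\<tau> \<equiv> 16 * sqrt y"
  shows "(\<Sum>l<Suc L. C * 2 powr (real l / 2) * \<tau>) \<le> 64 * C * y powr g"
    and "q ^ Suc L \<le> y powr g"
    and "2 ^ Suc L \<le> 4 * real n"
    and "1 / \<tau> \<le> real n"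
    and "1 / real n ^ 3 \<le> y powr g"
    and "exp (- (sqrt (real n) * \<tau> / 4)\<^sup>2 / 4) = 1 / real n ^ 4"
    and "exp (- 5 * real n * \<tau>\<^sup>2 / 32) \<le> 1 / real n ^ 5"
    and "\<tau> > 0"
proof -
  have np: "real n > 0" using n2 by simp
  have y0: "0 < y" and y1: "y \<le> 1" and y2: "1 / (2 * real n) \<le> y"
    using y_props[OF n2] by (simp_all add: y_def)
  have a0: "0 < 2 * \<alpha> + 1" using apos by simp
  have r0: "0 < r" unfolding r_def using y0 by simp
  have r1: "r \<le> 1" unfolding r_def using y0 y1 a0 by (simp add: powr_le1)
  have L1: "2 ^ L \<le> 1 / r" and L2: "1 / r < 2 ^ Suc L"
    using choose_L[OF r0 r1] by (simp_all add: L_def)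
  have g01: "0 < g" "g \<le> 1" unfolding g_def using apos by (auto simp: field_simps)
  have ysr: "sqrt (y / r) = y powr g"
  proof -
    have "y / r = y powr (1 - 1 / (2 * \<alpha> + 1))"
      unfolding r_def using y0 by (simp add: powr_diff)
    also have "1 - 1 / (2 * \<alpha> + 1) = 2 * g" unfolding g_def using a0 by (simp add: field_simps)
    finally have "y / r = y powr (2 * g)" .
    then have "sqrt (y / r) = (y powr (2 * g)) powr (1/2)" using y0 by (simp add: powr_half_sqrt)
    also have "\<dots> = y powr g" by (simp add: powr_powr)
    finally show ?thesis .
  qed
  have "(\<Sum>l<Suc L. C * 2 powr (real l / 2) * \<tau>) = C * \<tau> * (\<Sum>l<Suc L. sqrt 2 ^ l)"
    by (simp add: powr_half sum_distrib_left algebra_simps)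
  also have "\<dots> \<le> C * \<tau> * ((2 + sqrt 2) * sqrt 2 ^ L)"
    using Cpos y0 by (intro mult_left_mono sum_sqrt2) (auto simp: \<tau>_def)
  also have "\<dots> \<le> C * \<tau> * (4 * sqrt (1 / r))"
  proof (intro mult_left_mono mult_mono)
    show "2 + sqrt 2 \<le> 4" using real_sqrt_le_mono[of 2 4] by simp
    have "sqrt 2 ^ L = sqrt (2 ^ L)" by (simp add: real_sqrt_power)
    then show "sqrt 2 ^ L \<le> sqrt (1 / r)" using L1 by simp
  qed (use Cpos y0 in \<open>auto simp: \<tau>_def\<close>)
  also have "\<dots> = 64 * C * sqrt (y / r)"
    unfolding \<tau>_def by (simp add: real_sqrt_divide field_simps)
  also have "\<dots> = 64 * C * y powr g" by (simp add: ysr)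
  finally show "(\<Sum>l<Suc L. C * 2 powr (real l / 2) * \<tau>) \<le> 64 * C * y powr g" .
  have "q ^ Suc L = (2 ^ Suc L) powr (- \<alpha>)"
  proof -
    have e1: "q ^ Suc L = q powr real (Suc L)" by (rule powr_realpow[OF q_pos, symmetric])
    have e2: "q powr real (Suc L) = (2 powr real (Suc L)) powr (- \<alpha>)"
      unfolding q_def by (simp add: powr_powr mult.commute)
    have e3: "(2::real) powr real (Suc L) = 2 ^ Suc L" by (rule powr_realpow) simp
    show ?thesis unfolding e1 e2 e3 ..
  qed
  also have "\<dots> \<le> (1 / r) powr (- \<alpha>)"
    using L2 r0 apos by (intro powr_mono2') auto
  also have "\<dots> = r powr \<alpha>" using r0 by (simp add: powr_divide powr_minus_divide)
  also have "\<dots> = y powr g" unfolding r_def g_def by (simp add: powr_powr)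
  finally show "q ^ Suc L \<le> y powr g" .
  have "1 / r \<le> 1 / y"
  proof -
    have "1 / r = (1 / y) powr (1 / (2 * \<alpha> + 1))" unfolding r_def using y0 by (simp add: powr_divide)
    also have "\<dots> \<le> (1 / y) powr 1"
      using y0 y1 a0 apos by (intro powr_mono) (auto simp: field_simps)
    finally show ?thesis using y0 by simp
  qed
  also have "\<dots> \<le> 2 * real n" using y2 y0 np by (simp add: field_simps)
  finally have "2 ^ L \<le> 2 * real n" using L1 by linarith
  then show "2 ^ Suc L \<le> 4 * real n" by simp
  show t0: "\<tau> > 0" unfolding \<tau>_def using y0 by simp
  have "1 / sqrt (real n) \<le> \<tau>"
  proof -
    have "sqrt (1 / (2 * real n)) \<le> sqrt y" using y2 by simp
    then have "1 / sqrt (2 * real n) \<le> sqrt y" by (simp add: real_sqrt_divide)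
    moreover have "1 / sqrt (real n) \<le> 16 * (1 / sqrt (2 * real n))"
    proof -
      have "sqrt (2 * real n) = sqrt 2 * sqrt (real n)" by (simp add: real_sqrt_mult)
      moreover have "sqrt 2 \<le> 16" using real_sqrt_le_mono[of 2 256] by simp
      ultimately show ?thesis using np by (simp add: field_simps)
    qed
    ultimately show ?thesis unfolding \<tau>_def by linarith
  qed
  then have "1 / \<tau> \<le> sqrt (real n)" using t0 np by (simp add: field_simps)
  also have "sqrt (real n) \<le> real n"
  proof -
    have "real n \<le> (real n)\<^sup>2" using n2 by (simp add: power2_eq_square)
    then have "sqrt (real n) \<le> sqrt ((real n)\<^sup>2)" by (rule real_sqrt_le_mono)
    then show ?thesis by simp
  qed
  finally show "1 / \<tau> \<le> real n" .
  have "2 * real n \<le> real n ^ 3"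
  proof -
    have "(2::real) * 1 \<le> real n * real n" using n2 by (intro mult_mono) auto
    then have "2 * real n \<le> real n * real n * real n" using np by (intro mult_right_mono[of 2 "real n * real n" "real n", simplified]) auto
    then show ?thesis by (simp add: power3_eq_cube)
  qed
  then have "1 / real n ^ 3 \<le> 1 / (2 * real n)" using np by (intro divide_left_mono) auto
  also have "\<dots> \<le> y" by (rule y2)
  also have "y = y powr 1" using y0 by simp
  also have "\<dots> \<le> y powr g" using y0 y1 g01 by (intro powr_mono') auto
  finally show "1 / real n ^ 3 \<le> y powr g" .
  have sq: "(sqrt (real n) * \<tau> / 4)\<^sup>2 = 16 * ln (real n)"
    unfolding \<tau>_def y_def using np y0 by (simp add: power2_eq_square field_simps real_sqrt_mult[symmetric] y_def)
  have "exp (- (sqrt (real n) * \<tau> / 4)\<^sup>2 / 4) = exp (- (real 4 * ln (real n)))" unfolding sq by simp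
  also have "\<dots> = 1 / real n ^ 4" by (rule exp_ln_pow[OF np])
  finally show "exp (- (sqrt (real n) * \<tau> / 4)\<^sup>2 / 4) = 1 / real n ^ 4" .
  have sq2: "real n * \<tau>\<^sup>2 = 256 * ln (real n)"
    unfolding \<tau>_def y_def using np y0 by (simp add: power2_eq_square y_def)
  have "exp (- 5 * real n * \<tau>\<^sup>2 / 32) \<le> exp (- (real 5 * ln (real n)))"
    using sq2 ln_ge_half[OF n2] by simp
  also have "\<dots> = 1 / real n ^ 5" by (rule exp_ln_pow[OF np])
  finally show "exp (- 5 * real n * \<tau>\<^sup>2 / 32) \<le> 1 / real n ^ 5" .
qed

lemma sum_pow2_le: "(\<Sum>l<m. (2::real) ^ l) \<le> 2 ^ m"
  by (induction m) auto

lemma err_bound: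
  fixes n :: nat and B R \<tau> e1 e2 :: real
  assumes n2: "n \<ge> 2" and B: "B > R" and R: "R > 0" and tau: "\<tau> > 0" and tn: "1 / \<tau> \<le> real n"
    and e1: "e1 = 1 / real n ^ 4" and e2: "e2 \<le> 1 / real n ^ 5" and e20: "e2 \<ge> 0" and m: "2 ^ m \<le> 4 * real n"
  shows "(\<Sum>l<m. \<Sum>k<(2::nat) ^ l. C * 2 powr (real l / 2) *
              (2 * B * sg l * (sqrt 2 * e1)
               + 2 * (B * sg l)\<^sup>2 / min (\<tau> / 4) ((B - R) * sg l) * e2))
     \<le> 4 * (3 * B * C + 8 * B\<^sup>2 * C + 2 * B\<^sup>2 * C / (B - R)) / real n ^ 3"
proof -
  define K where "K = 3 * B * C + 8 * B\<^sup>2 * C + 2 * B\<^sup>2 * C / (B - R)"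
  have np: "real n \<ge> 1" using n2 by simp
  have B0: "B > 0" using B R by simp
  have BR: "B - R > 0" using B by simp
  have trm: "C * 2 powr (real l / 2) * (2 * B * sg l * (sqrt 2 * e1)
               + 2 * (B * sg l)\<^sup>2 / min (\<tau> / 4) ((B - R) * sg l) * e2) \<le> K / real n ^ 4" for l
  proof -
    have s: "sg l > 0" "sg l \<le> 1" by (rule sg_pos, rule sg_le1)
    have ql: "q ^ l \<le> 1" "q ^ l \<ge> 0" using q_pos q_lt1 by (auto intro: power_le_one)
    have w: "C * 2 powr (real l / 2) * sg l = C * q ^ l" using sg_q[of l] by (simp add: algebra_simps)
    have sq2: "sqrt 2 \<le> 3 / 2"
    proof -
      have "sqrt 2 \<le> sqrt ((3/2)\<^sup>2)" by (rule real_sqrt_le_mono) (simp add: power2_eq_square)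
      then show ?thesis by (simp only: real_sqrt_abs)
    qed
    have t1: "C * 2 powr (real l / 2) * (2 * B * sg l * (sqrt 2 * e1)) = 2 * sqrt 2 * B * (C * 2 powr (real l / 2) * sg l) * e1"
      by (simp add: algebra_simps)
    also have "\<dots> = 2 * sqrt 2 * B * C * q ^ l * e1" unfolding w by (simp add: algebra_simps)
    also have "\<dots> \<le> 3 * B * C * e1"
    proof -
      have "2 * sqrt 2 * q ^ l \<le> 3 * 1" using sq2 ql by (intro mult_mono) auto
      moreover have "0 \<le> B * C * e1" using B0 Cpos e1 by simp
      ultimately have "(2 * sqrt 2 * q ^ l) * (B * C * e1) \<le> 3 * (B * C * e1)"
        by (metis mult_right_mono mult_1_right)
      then show ?thesis by (simp add: algebra_simps)
    qed
    finally have T1: "C * 2 powr (real l / 2) * (2 * B * sg l * (sqrt 2 * e1)) \<le> 3 * B * C * e1" .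
    define mn where "mn = min (\<tau> / 4) ((B - R) * sg l)"
    have mn0: "mn > 0" unfolding mn_def using tau BR s by simp
    have inv: "1 / mn \<le> 4 / \<tau> + 1 / ((B - R) * sg l)"
    proof (cases "\<tau> / 4 \<le> (B - R) * sg l")
      case True then have "mn = \<tau> / 4" by (simp add: mn_def)
      then have "1 / mn = 4 / \<tau>" using tau by (simp add: field_simps)
      moreover have "0 \<le> 1 / ((B - R) * sg l)" using BR s by simp
      ultimately show ?thesis by linarith
    next
      case False then have "mn = (B - R) * sg l" by (simp add: mn_def)
      moreover have "0 \<le> 4 / \<tau>" using tau by simp
      ultimately show ?thesis by simp
    qed
    have "C * 2 powr (real l / 2) * (2 * (B * sg l)\<^sup>2 / mn * e2)
        = 2 * B\<^sup>2 * (C * 2 powr (real l / 2) * sg l) * sg l * (1 / mn) * e2"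
      by (simp add: power2_eq_square algebra_simps)
    also have "\<dots> = 2 * B\<^sup>2 * C * q ^ l * sg l * (1 / mn) * e2" unfolding w by (simp add: algebra_simps)
    also have "\<dots> \<le> 2 * B\<^sup>2 * C * q ^ l * sg l * (4 / \<tau> + 1 / ((B - R) * sg l)) * e2"
      using B0 Cpos ql s e20 inv by (intro mult_right_mono mult_left_mono) auto
    also have "\<dots> = (2 * B\<^sup>2 * C * q ^ l) * (sg l * (4 / \<tau> + 1 / ((B - R) * sg l))) * e2"
      by (simp only: mult.assoc)
    also have "\<dots> = (2 * B\<^sup>2 * C * q ^ l) * (sg l * (4 / \<tau>) + 1 / (B - R)) * e2"
    proof -
      have "sg l * (4 / \<tau> + 1 / ((B - R) * sg l)) = sg l * (4 / \<tau>) + 1 / (B - R)"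
        using s by (simp add: distrib_left)
      then show ?thesis by simp
    qed
    also have "\<dots> \<le> (2 * B\<^sup>2 * C) * (4 * real n + 1 / (B - R)) * e2"
    proof -
      have a: "2 * B\<^sup>2 * C * q ^ l \<le> 2 * B\<^sup>2 * C" using ql Cpos by (simp add: mult_left_le)
      have "sg l * (4 / \<tau>) \<le> 1 * (4 / \<tau>)" using s tau by (intro mult_right_mono) auto
      also have "\<dots> \<le> 4 * real n" using tn by (simp add: divide_simps)
      finally have b: "sg l * (4 / \<tau>) + 1 / (B - R) \<le> 4 * real n + 1 / (B - R)" by simp
      have c: "0 \<le> sg l * (4 / \<tau>) + 1 / (B - R)" using s tau BR by simp
      have "(2 * B\<^sup>2 * C * q ^ l) * (sg l * (4 / \<tau>) + 1 / (B - R)) \<le> (2 * B\<^sup>2 * C) * (4 * real n + 1 / (B - R))"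
        by (rule mult_mono[OF a b]) (use Cpos c in auto)
      then show ?thesis using e20 by (rule mult_right_mono)
    qed
    also have "\<dots> \<le> (2 * B\<^sup>2 * C) * (4 * real n + 1 / (B - R)) * (1 / real n ^ 5)"
      using e2 BR Cpos np by (intro mult_left_mono) auto
    also have "\<dots> \<le> (8 * B\<^sup>2 * C + 2 * B\<^sup>2 * C / (B - R)) / real n ^ 4"
    proof -
      have "(2 * B\<^sup>2 * C) * (4 * real n + 1 / (B - R)) * (1 / real n ^ 5)
          = 8 * B\<^sup>2 * C / real n ^ 4 + (2 * B\<^sup>2 * C / (B - R)) / real n ^ 5"
      proof -
        have "real n ^ 5 = real n * real n ^ 4" by (simp add: power_Suc[symmetric])
        then have "(2 * B\<^sup>2 * C) * (4 * real n) * (1 / real n ^ 5) = 8 * B\<^sup>2 * C / real n ^ 4"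
          using np by simp
        moreover have "(2 * B\<^sup>2 * C) * (1 / (B - R)) * (1 / real n ^ 5) = (2 * B\<^sup>2 * C / (B - R)) / real n ^ 5"
          by simp
        ultimately show ?thesis by (simp only: distrib_left distrib_right)
      qed
      also have "(2 * B\<^sup>2 * C / (B - R)) / real n ^ 5 \<le> (2 * B\<^sup>2 * C / (B - R)) / real n ^ 4"
        using np BR Cpos by (intro divide_left_mono power_increasing) auto
      finally show ?thesis by (simp add: add_divide_distrib)
    qed
    finally have T2: "C * 2 powr (real l / 2) * (2 * (B * sg l)\<^sup>2 / mn * e2) \<le> (8 * B\<^sup>2 * C + 2 * B\<^sup>2 * C / (B - R)) / real n ^ 4" .
    have "C * 2 powr (real l / 2) * (2 * B * sg l * (sqrt 2 * e1) + 2 * (B * sg l)\<^sup>2 / mn * e2)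
      = C * 2 powr (real l / 2) * (2 * B * sg l * (sqrt 2 * e1)) + C * 2 powr (real l / 2) * (2 * (B * sg l)\<^sup>2 / mn * e2)"
      by (simp add: algebra_simps)
    also have "\<dots> \<le> 3 * B * C * e1 + (8 * B\<^sup>2 * C + 2 * B\<^sup>2 * C / (B - R)) / real n ^ 4"
      using T1 T2 by linarith
    also have "\<dots> = K / real n ^ 4" unfolding K_def e1 by (simp add: add_divide_distrib)
    finally show ?thesis unfolding mn_def .
  qed
  have K0: "K \<ge> 0" unfolding K_def using B0 BR Cpos by simp
  have "(\<Sum>l<m. \<Sum>k<(2::nat) ^ l. C * 2 powr (real l / 2) *
              (2 * B * sg l * (sqrt 2 * e1) + 2 * (B * sg l)\<^sup>2 / min (\<tau> / 4) ((B - R) * sg l) * e2))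
     \<le> (\<Sum>l<m. \<Sum>k<(2::nat) ^ l. K / real n ^ 4)"
    by (intro sum_mono trm)
  also have "\<dots> = (\<Sum>l<m. (2::real) ^ l * (K / real n ^ 4))" by simp
  also have "\<dots> = (\<Sum>l<m. (2::real) ^ l) * (K / real n ^ 4)" by (rule sum_distrib_right[symmetric])
  also have "\<dots> \<le> (4 * real n) * (K / real n ^ 4)"
    using sum_pow2_le[of m] m K0 np by (intro mult_right_mono) auto
  also have "\<dots> = 4 * K / real n ^ 3"
  proof -
    have "real n ^ 4 = real n * real n ^ 3" by (simp add: power_Suc[symmetric])
    then show ?thesis using np by simp
  qed
  finally show ?thesis unfolding K_def .
qed

end


theorem proposition1:
  fixes \<psi> :: "nat \<Rightarrow> nat \<Rightarrow> real \<Rightarrow> real" and S \<alpha> R B :: real and f0 :: "real \<Rightarrow> real"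
  assumes "wavelet_basis \<psi> S" and "S \<ge> \<alpha>"
    and "\<alpha> > 0" and "R > 0" and "B > R"
    and "in_Linf01 f0"
    and "\<forall>l k. k < 2 ^ l \<longrightarrow> 2 powr (real l * (1/2 + \<alpha>)) * \<bar>wcoef \<psi> f0 l k\<bar> \<le> R"
  shows "\<exists>M>0. \<forall>n::nat. n \<ge> 2 \<longrightarrow>
    (\<integral>\<^sup>+ \<epsilon>. (\<integral>\<^sup>+ \<theta>. Linf_norm01 (\<lambda>t. wsynth \<psi> \<theta> t - f0 t)
                  \<partial>posterior \<alpha> B n (observ \<psi> f0 n \<epsilon>)) \<partial>noise)
      \<le> ennreal (M * (ln (real n) / real n) powr (\<alpha> / (2 * \<alpha> + 1)))"
proof -
  note wb = assms(1)[unfolded wavelet_basis_def]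
  from wb obtain C where C: "C > 0"
    and supb: "\<forall>l k. k < 2 ^ l \<longrightarrow> (\<forall>t\<in>{0..1}. \<bar>\<psi> l k t\<bar> \<le> C * 2 powr (real l / 2))"
    and sumb: "\<forall>l. \<forall>t\<in>{0..1}. (\<Sum>k<2 ^ l. \<bar>\<psi> l k t\<bar>) \<le> C * 2 powr (real l / 2)"
    by blast
  interpret wv \<psi> C \<alpha>
  proof
    show "\<And>l k. \<psi> l k \<in> borel_measurable lborel" using wb by blast
    show "\<And>l k l' k'. k < 2 ^ l \<Longrightarrow> k' < 2 ^ l' \<Longrightarrow>
        (LINT t:{0..1}|lborel. \<psi> l k t * \<psi> l' k' t) = (if (l, k) = (l', k') then 1 else 0)"
      using wb by blast
    show "\<And>g. g \<in> borel_measurable lborel \<Longrightarrow> set_integrable lborel {0..1} (\<lambda>t. (g t)\<^sup>2) \<Longrightarrow>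
        (\<forall>l k. k < 2 ^ l \<longrightarrow> (LINT t:{0..1}|lborel. g t * \<psi> l k t) = 0) \<Longrightarrow>
        (AE t in lborel. t \<in> {0..1} \<longrightarrow> g t = 0)"
      using wb by blast
  qed (use C supb sumb assms(3) in auto)
  from assms(6) obtain K where f0m: "f0 \<in> borel_measurable lborel"
    and K: "AE t in lborel. t \<in> {0..1} \<longrightarrow> \<bar>f0 t\<bar> \<le> K"
    unfolding in_Linf01_def by blast
  define c where "c i = wcoef \<psi> f0 (fst i) (snd i)" for i
  have cdef: "c (l, k) = wcoef \<psi> f0 l k" for l k by (simp add: c_def)
  have cbc: "cb R c"
    unfolding cb_def
  proof (intro allI impI)
    fix l k :: nat assume k: "k < 2 ^ l"
    have h: "2 powr (real l * (1/2 + \<alpha>)) * \<bar>c (l, k)\<bar> \<le> R" using assms(7) k by (simp add: cdef)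
    have "sg l * 2 powr (real l * (1/2 + \<alpha>)) = 1"
      unfolding sg_def by (simp add: powr_add[symmetric])
    then have "\<bar>c (l, k)\<bar> = sg l * (2 powr (real l * (1/2 + \<alpha>)) * \<bar>c (l, k)\<bar>)" by (simp add: mult.assoc[symmetric])
    also have "\<dots> \<le> sg l * R" using h sg_pos[of l] by (intro mult_left_mono) auto
    finally show "\<bar>c (l, k)\<bar> \<le> R * sg l" by (simp add: mult.commute)
  qed
  have eq: "AE t in lborel. t \<in> {0..1} \<longrightarrow> wsynth \<psi> c t = f0 t"
    by (rule f0_eq[OF f0m K _ cbc]) (simp add: c_def)
  define K' where "K' = 3 * B * C + 8 * B\<^sup>2 * C + 2 * B\<^sup>2 * C / (B - R)"
  define M where "M = 64 * C + 2 * B * C / (1 - q) + 4 * K'"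
  have B0: "B > 0" using assms(4,5) by simp
  have K'0: "K' \<ge> 0" unfolding K'_def using B0 C assms(5) by simp
  have M0: "M > 0" unfolding M_def using C B0 q_lt1 K'0 by (simp add: add_pos_nonneg)
  show ?thesis
  proof (intro exI[of _ M] conjI allI impI M0)
    fix n :: nat assume n2: "n \<ge> 2"
    define y where "y = ln (real n) / real n"
    define g where "g = \<alpha> / (2 * \<alpha> + 1)"
    define r where "r = y powr (1 / (2 * \<alpha> + 1))"
    define L where "L = nat \<lfloor>log 2 (1 / r)\<rfloor>"
    define \<tau> where "\<tau> = 16 * sqrt y"
    note np0 = numeric_parts[OF n2 assms(5) assms(4), folded y_def]
    note np1 = np0[folded g_def]
    note np2 = np1[folded r_def]
    note np3 = np2[folded L_def]
    note np = np3[folded \<tau>_def]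
    have yg0: "y powr g \<ge> 0" by simp
    have "(\<integral>\<^sup>+ \<epsilon>. (\<integral>\<^sup>+ \<theta>. Linf_norm01 (\<lambda>t. wsynth \<psi> \<theta> t - f0 t)
                  \<partial>posterior \<alpha> B n (observ \<psi> f0 n \<epsilon>)) \<partial>noise)
     \<le> ennreal (((\<Sum>l<Suc L. C * 2 powr (real l / 2) * \<tau>) + 2 * B * C * q ^ Suc L / (1 - q))
          + (\<Sum>l<Suc L. \<Sum>k<(2::nat) ^ l. C * 2 powr (real l / 2) *
              (2 * B * sg l * (sqrt 2 * exp (- (sqrt (real n) * \<tau> / 4)\<^sup>2 / 4))
               + 2 * (B * sg l)\<^sup>2 / min (\<tau> / 4) ((B - R) * sg l) * exp (- 5 * real n * \<tau>\<^sup>2 / 32))))"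
      apply (rule outer_bound[OF assms(5) less_imp_le[OF assms(4)] f0m eq cbc cdef np(8)])
      using n2 apply simp
      done
    also have "\<dots> \<le> ennreal (M * y powr g)"
    proof (rule ennreal_leI)
      have E: "(\<Sum>l<Suc L. \<Sum>k<(2::nat) ^ l. C * 2 powr (real l / 2) *
              (2 * B * sg l * (sqrt 2 * exp (- (sqrt (real n) * \<tau> / 4)\<^sup>2 / 4))
               + 2 * (B * sg l)\<^sup>2 / min (\<tau> / 4) ((B - R) * sg l) * exp (- 5 * real n * \<tau>\<^sup>2 / 32)))
          \<le> 4 * K' / real n ^ 3"
        unfolding K'_def
        by (rule err_bound[OF n2 assms(5) assms(4) np(8) np(4) np(6) np(7) _ np(3)]) simp
      also have "\<dots> \<le> 4 * K' * y powr g"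
      proof -
        have "4 * K' / real n ^ 3 = (4 * K') * (1 / real n ^ 3)" by simp
        also have "\<dots> \<le> (4 * K') * y powr g" using np(5) K'0 by (intro mult_left_mono) auto
        finally show ?thesis .
      qed
      finally have E': "(\<Sum>l<Suc L. \<Sum>k<(2::nat) ^ l. C * 2 powr (real l / 2) *
              (2 * B * sg l * (sqrt 2 * exp (- (sqrt (real n) * \<tau> / 4)\<^sup>2 / 4))
               + 2 * (B * sg l)\<^sup>2 / min (\<tau> / 4) ((B - R) * sg l) * exp (- 5 * real n * \<tau>\<^sup>2 / 32)))
          \<le> 4 * K' * y powr g" .
      have Q: "2 * B * C * q ^ Suc L / (1 - q) \<le> 2 * B * C / (1 - q) * y powr g"
        using np(2) B0 C q_lt1 by (simp add: divide_simps mult_left_mono)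
      show "((\<Sum>l<Suc L. C * 2 powr (real l / 2) * \<tau>) + 2 * B * C * q ^ Suc L / (1 - q))
          + (\<Sum>l<Suc L. \<Sum>k<(2::nat) ^ l. C * 2 powr (real l / 2) *
              (2 * B * sg l * (sqrt 2 * exp (- (sqrt (real n) * \<tau> / 4)\<^sup>2 / 4))
               + 2 * (B * sg l)\<^sup>2 / min (\<tau> / 4) ((B - R) * sg l) * exp (- 5 * real n * \<tau>\<^sup>2 / 32)))
          \<le> M * y powr g"
        using np(1) Q E' unfolding M_def by (simp add: algebra_simps)
    qed
    finally show "(\<integral>\<^sup>+ \<epsilon>. (\<integral>\<^sup>+ \<theta>. Linf_norm01 (\<lambda>t. wsynth \<psi> \<theta> t - f0 t)
                  \<partial>posterior \<alpha> B n (observ \<psi> f0 n \<epsilon>)) \<partial>noise)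
      \<le> ennreal (M * (ln (real n) / real n) powr (\<alpha> / (2 * \<alpha> + 1)))"
      unfolding y_def g_def .
  qed
qed


end
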